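(* The group $G$ has exactly two orbits on the planes of $\mathcal W(5,q)$ through $N$: an orbit of size $q^2+1$ consisting of the planes meeting $\mathcal Q$ in a line of $\mathcal S$, and an orbit of size $q^3+q$ consisting of the planes meeting $\mathcal Q$ in a non-degenerate conic.
   Context: Let $q$ be an even prime power and $\mathrm{PG}(5,q^2)$ have homogeneous coordinates $(X_1,\dots,X_6)$, points written as column vectors. Let $\Sigma$ be the set of points having a coordinate vector $(\alpha,\alpha^q,\delta_0,\beta,\beta^q,\delta_1)$ with $\alpha,\beta\in\mathbb F_{q^2}$, $\delta_0,\delta_1\in\mathbb F_q$ (a Baer subgeometry $\cong\mathrm{PG}(5,q)$). Let $\Pi=\Sigma\cap\{X_6=0\}$, $\mathcal Q=\Sigma\cap\{X_6=0,\ X_3^2+X_1X_5+X_2X_4=0\}$ (a parabolic quadric $\mathcal Q(4,q)$ of $\Pi$) with nucleus $N=(0,0,1,0,0,0)$. Fix $\omega\in\mathbb F_{q^2}\setminus\mathbb F_q$ with $\omega+\omega^q=1$ and let $h(X,Y)=\omega X_1Y_4^q+\omega^qX_1Y_6^q+\omega^qX_2Y_5^q+\omega X_2Y_6^q+X_3Y_6^q+\omega^qX_4Y_1^q+\omega X_5Y_2^q+\omega X_6Y_1^q+\omega^qX_6Y_2^q+X_6Y_3^q$. Restricted to $\Sigma$, $P\perp R\iff h(P,R)=0$ defines a symplectic polarity $\perp$ of $\Sigma$; $\mathcal W(5,q)$ is the associated symplectic polar space (so $N^\perp=\Pi$). For $a,b,c,d\in\mathbb F_{q^2}$ with $ad+bc=1$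 let $M_{a,b,c,d}$ be the $6\times6$ matrix with rows $(a^2,0,0,0,c^2,\tfrac{c(a+c\omega^q)}{\omega})$, $(0,a^{2q},0,c^{2q},0,\tfrac{c^q(a^q+c^q\omega)}{\omega^q})$, $(ab,a^qb^q,1,c^qd^q,cd,\tfrac{d(a+c\omega^q)}{\omega}+\tfrac{d^q(a^q+c^q\omega)}{\omega^q}+\tfrac{1}{\omega^{q+1}})$, $(0,b^{2q},0,d^{2q},0,\tfrac{d^q(b^q+d^q\omega)+\omega}{\omega^q})$, $(b^2,0,0,0,d^2,\tfrac{d(b+d\omega^q)+\omega^q}{\omega})$, $(0,0,0,0,0,1)$, and let $G\cong\mathrm{PSL}(2,q^2)$ be the group of projectivities $X\mapsto M_{a,b,c,d}X$; $G$ stabilizes $\Sigma,\Pi,\mathcal Q,N$ and $\perp$. Let $\mathcal S$ be the set of the $q^2+1$ lines $S_t=\{(\lambda,\lambda^q,\lambda t+\lambda^qt^q,\lambda^qt^{2q},\lambda t^2,0):\lambda\in\mathbb F_{q^2}^*\}$, $t\in\mathbb F_{q^2}$, and $S_\infty=\{(0,0,0,\lambda^q,\lambda,0):\lambda\in\mathbb F_{q^2}^*\}$; these are lines of $\mathcal W(5,q)$ contained in $\mathcal Q$ and form a line spread of $\mathcal Q$. *)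

theory Defs
  imports Main
begin

text \<open>Vectors of the 6-dimensional space over the field 'a are functions nat => 'a;
  coordinate X_i is the value at i (i = 1..6), all other values are 0.\<close>

definition mk6 :: "'a::zero \<Rightarrow> 'a \<Rightarrow> 'a \<Rightarrow> 'a \<Rightarrow> 'a \<Rightarrow> 'a \<Rightarrow> nat \<Rightarrow> 'a" where
  "mk6 a1 a2 a3 a4 a5 a6 = (\<lambda>i. if i = 1 then a1 else if i = 2 then a2 else if i = 3 then a3
      else if i = 4 then a4 else if i = 5 then a5 else if i = 6 then a6 else 0)"

definition pt :: "(nat \<Rightarrow> 'a::field) \<Rightarrow> (nat \<Rightarrow> 'a) set" where
  "pt v = {(\<lambda>i. c * v i) | c. c \<noteq> 0}"

definition Fq :: "nat \<Rightarrow> 'a::field set" where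
  "Fq q = {x. x ^ q = x}"

definition SigmaVecs :: "nat \<Rightarrow> (nat \<Rightarrow> 'a::field) set" where
  "SigmaVecs q = {mk6 \<alpha> (\<alpha> ^ q) d0 \<beta> (\<beta> ^ q) d1 | \<alpha> \<beta> d0 d1. d0 \<in> Fq q \<and> d1 \<in> Fq q}"

definition SigmaPts :: "nat \<Rightarrow> (nat \<Rightarrow> 'a::field) set set" where
  "SigmaPts q = {pt v | v. v \<in> SigmaVecs q \<and> v \<noteq> (\<lambda>_. 0)}"

definition lin3 :: "(nat \<Rightarrow> 'a::field) \<Rightarrow> (nat \<Rightarrow> 'a) \<Rightarrow> (nat \<Rightarrow> 'a) \<Rightarrow> 'a \<Rightarrow> 'a \<Rightarrow> 'a \<Rightarrow> nat \<Rightarrow> 'a" where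
  "lin3 u v w a b c = (\<lambda>i. a * u i + b * v i + c * w i)"

definition fq_indep :: "nat \<Rightarrow> (nat \<Rightarrow> 'a::field) \<Rightarrow> (nat \<Rightarrow> 'a) \<Rightarrow> (nat \<Rightarrow> 'a) \<Rightarrow> bool" where
  "fq_indep q u v w \<longleftrightarrow> (\<forall>a b c. a \<in> Fq q \<and> b \<in> Fq q \<and> c \<in> Fq q \<and> lin3 u v w a b c = (\<lambda>_. 0)
       \<longrightarrow> a = 0 \<and> b = 0 \<and> c = 0)"

definition plane_span :: "nat \<Rightarrow> (nat \<Rightarrow> 'a::field) \<Rightarrow> (nat \<Rightarrow> 'a) \<Rightarrow> (nat \<Rightarrow> 'a) \<Rightarrow> (nat \<Rightarrow> 'a) set set" where
  "plane_span q u v w = {pt (lin3 u v w a b c) | a b c.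
      a \<in> Fq q \<and> b \<in> Fq q \<and> c \<in> Fq q \<and> \<not> (a = 0 \<and> b = 0 \<and> c = 0)}"

definition SigmaPlanes :: "nat \<Rightarrow> (nat \<Rightarrow> 'a::field) set set set" where
  "SigmaPlanes q = {plane_span q u v w | u v w.
      u \<in> SigmaVecs q \<and> v \<in> SigmaVecs q \<and> w \<in> SigmaVecs q \<and> fq_indep q u v w}"

definition hform :: "nat \<Rightarrow> 'a::field \<Rightarrow> (nat \<Rightarrow> 'a) \<Rightarrow> (nat \<Rightarrow> 'a) \<Rightarrow> 'a" where
  "hform q \<omega> X Y =
     \<omega> * X 1 * Y 4 ^ q + \<omega> ^ q * X 1 * Y 6 ^ q + \<omega> ^ q * X 2 * Y 5 ^ q + \<omega> * X 2 * Y 6 ^ q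
     + X 3 * Y 6 ^ q + \<omega> ^ q * X 4 * Y 1 ^ q + \<omega> * X 5 * Y 2 ^ q + \<omega> * X 6 * Y 1 ^ q
     + \<omega> ^ q * X 6 * Y 2 ^ q + X 6 * Y 3 ^ q"

definition perp :: "nat \<Rightarrow> 'a::field \<Rightarrow> (nat \<Rightarrow> 'a) set \<Rightarrow> (nat \<Rightarrow> 'a) set \<Rightarrow> bool" where
  "perp q \<omega> P R \<longleftrightarrow> (\<forall>x\<in>P. \<forall>y\<in>R. hform q \<omega> x y = 0)"

definition Npt :: "(nat \<Rightarrow> 'a::field) set" where
  "Npt = pt (mk6 0 0 1 0 0 0)"

definition WPlanesN :: "nat \<Rightarrow> 'a::field \<Rightarrow> (nat \<Rightarrow> 'a) set set set" where
  "WPlanesN q \<omega> = {\<pi> \<in> SigmaPlanes q. (\<forall>P\<in>\<pi>. \<forall>R\<in>\<pi>. perp q \<omega> P R) \<and> Npt \<in> \<pi>}"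

definition Qpts :: "nat \<Rightarrow> (nat \<Rightarrow> 'a::field) set set" where
  "Qpts q = {P \<in> SigmaPts q. \<forall>x\<in>P. x 6 = 0 \<and> x 3 ^ 2 + x 1 * x 5 + x 2 * x 4 = 0}"

definition Sline :: "nat \<Rightarrow> 'a::field \<Rightarrow> (nat \<Rightarrow> 'a) set set" where
  "Sline q t = {pt (mk6 l (l ^ q) (l * t + l ^ q * t ^ q) (l ^ q * t ^ (2 * q)) (l * t ^ 2) 0) | l. l \<noteq> 0}"

definition Sline_inf :: "nat \<Rightarrow> (nat \<Rightarrow> 'a::field) set set" where
  "Sline_inf q = {pt (mk6 0 0 0 (l ^ q) l 0) | l. l \<noteq> 0}"

definition Spread :: "nat \<Rightarrow> (nat \<Rightarrow> 'a::field) set set set" where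
  "Spread q = insert (Sline_inf q) (range (Sline q))"

text \<open>Ternary quadratic form with coefficients in F_q and its non-singularity
  (no nonzero singular vector: zero of the form lying in the radical of the polar form).\<close>
definition qf3 :: "'a::field \<Rightarrow> 'a \<Rightarrow> 'a \<Rightarrow> 'a \<Rightarrow> 'a \<Rightarrow> 'a \<Rightarrow> 'a \<Rightarrow> 'a \<Rightarrow> 'a \<Rightarrow> 'a" where
  "qf3 c1 c2 c3 c4 c5 c6 x y z = c1 * x ^ 2 + c2 * y ^ 2 + c3 * z ^ 2 + c4 * x * y + c5 * x * z + c6 * y * z"

definition qf3_nonsingular :: "nat \<Rightarrow> 'a::field \<Rightarrow> 'a \<Rightarrow> 'a \<Rightarrow> 'a \<Rightarrow> 'a \<Rightarrow> 'a \<Rightarrow> bool" where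
  "qf3_nonsingular q c1 c2 c3 c4 c5 c6 \<longleftrightarrow>
     (\<forall>x y z. x \<in> Fq q \<and> y \<in> Fq q \<and> z \<in> Fq q \<and> \<not> (x = 0 \<and> y = 0 \<and> z = 0)
        \<and> qf3 c1 c2 c3 c4 c5 c6 x y z = 0 \<longrightarrow>
        (\<exists>x' y' z'. x' \<in> Fq q \<and> y' \<in> Fq q \<and> z' \<in> Fq q \<and>
           qf3 c1 c2 c3 c4 c5 c6 (x + x') (y + y') (z + z') - qf3 c1 c2 c3 c4 c5 c6 x y z
             - qf3 c1 c2 c3 c4 c5 c6 x' y' z' \<noteq> 0))"

definition nondeg_conic_in :: "nat \<Rightarrow> (nat \<Rightarrow> 'a::field) set set \<Rightarrow> (nat \<Rightarrow> 'a) set set \<Rightarrow> bool" where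
  "nondeg_conic_in q \<pi> C \<longleftrightarrow>
     (\<exists>u v w c1 c2 c3 c4 c5 c6.
        u \<in> SigmaVecs q \<and> v \<in> SigmaVecs q \<and> w \<in> SigmaVecs q \<and> fq_indep q u v w \<and>
        \<pi> = plane_span q u v w \<and>
        c1 \<in> Fq q \<and> c2 \<in> Fq q \<and> c3 \<in> Fq q \<and> c4 \<in> Fq q \<and> c5 \<in> Fq q \<and> c6 \<in> Fq q \<and>
        qf3_nonsingular q c1 c2 c3 c4 c5 c6 \<and>
        C = {pt (lin3 u v w x y z) | x y z. x \<in> Fq q \<and> y \<in> Fq q \<and> z \<in> Fq q \<and>
               \<not> (x = 0 \<and> y = 0 \<and> z = 0) \<and> qf3 c1 c2 c3 c4 c5 c6 x y z = 0})"

definition Mmat :: "nat \<Rightarrow> 'a::field \<Rightarrow> 'a \<Rightarrow> 'a \<Rightarrow> 'a \<Rightarrow> 'a \<Rightarrow> nat \<Rightarrow> nat \<Rightarrow> 'a" where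
  "Mmat q \<omega> a b c d = (\<lambda>i.
     if i = 1 then mk6 (a ^ 2) 0 0 0 (c ^ 2) (c * (a + c * \<omega> ^ q) / \<omega>)
     else if i = 2 then mk6 0 (a ^ (2 * q)) 0 (c ^ (2 * q)) 0 (c ^ q * (a ^ q + c ^ q * \<omega>) / \<omega> ^ q)
     else if i = 3 then mk6 (a * b) (a ^ q * b ^ q) 1 (c ^ q * d ^ q) (c * d)
        (d * (a + c * \<omega> ^ q) / \<omega> + d ^ q * (a ^ q + c ^ q * \<omega>) / \<omega> ^ q + 1 / \<omega> ^ (q + 1))
     else if i = 4 then mk6 0 (b ^ (2 * q)) 0 (d ^ (2 * q)) 0 ((d ^ q * (b ^ q + d ^ q * \<omega>) + \<omega>) / \<omega> ^ q)
     else if i = 5 then mk6 (b ^ 2) 0 0 0 (d ^ 2) ((d * (b + d * \<omega> ^ q) + \<omega> ^ q) / \<omega>)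
     else if i = 6 then mk6 0 0 0 0 0 1
     else (\<lambda>_. 0))"

definition mat_app :: "(nat \<Rightarrow> nat \<Rightarrow> 'a::field) \<Rightarrow> (nat \<Rightarrow> 'a) \<Rightarrow> nat \<Rightarrow> 'a" where
  "mat_app M v = (\<lambda>i. if 1 \<le> i \<and> i \<le> 6 then (\<Sum>j = 1..6. M i j * v j) else 0)"

definition act_pt :: "(nat \<Rightarrow> nat \<Rightarrow> 'a::field) \<Rightarrow> (nat \<Rightarrow> 'a) set \<Rightarrow> (nat \<Rightarrow> 'a) set" where
  "act_pt M P = mat_app M ` P"

definition Gmats :: "nat \<Rightarrow> 'a::field \<Rightarrow> (nat \<Rightarrow> nat \<Rightarrow> 'a) set" where
  "Gmats q \<omega> = {Mmat q \<omega> a b c d | a b c d. a * d + b * c = 1}"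

definition Gorbit :: "nat \<Rightarrow> 'a::field \<Rightarrow> (nat \<Rightarrow> 'a) set set \<Rightarrow> (nat \<Rightarrow> 'a) set set set" where
  "Gorbit q \<omega> \<pi> = {act_pt M ` \<pi> | M. M \<in> Gmats q \<omega>}"

end

theory Submission
  imports Defs
begin

locale setting =
  fixes q n :: nat and w :: "'a::{field,finite}"
  assumes n1: "n \<ge> 1" and qdef: "q = 2 ^ n" and cardF: "card (UNIV :: 'a set) = q ^ 2"
    and w_nFq: "w \<notin> Fq q" and w_tr: "w + w ^ q = 1"
begin

abbreviation FQ :: "'a set" where "FQ \<equiv> Fq q"

lemma two0: "(2::'a) = 0"
proof -
  have "(+) (1::'a) ` UNIV = UNIV"
    by (simp add: surj_def)
  hence "(\<Sum>y\<in>(UNIV::'a set). y) = (\<Sum>y\<in>(+) 1 ` UNIV. y)" by simp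
  also have "\<dots> = (\<Sum>y\<in>UNIV. 1 + y)" by (subst sum.reindex) (auto simp: inj_on_def)
  also have "\<dots> = of_nat (card (UNIV::'a set)) + (\<Sum>y\<in>UNIV. y)" by (simp add: sum.distrib)
  finally have "of_nat (card (UNIV::'a set)) = (0::'a)" by simp
  hence "(2::'a) ^ (2*n) = 0" using cardF qdef by (simp add: power_mult [symmetric] mult.commute)
  thus ?thesis by simp
qed

lemma add_self[simp]: "(x::'a) + x = 0"
proof -
  have "x + x = 2 * x" by (rule mult_2[symmetric])
  also have "\<dots> = 0" by (simp only: two0 mult_zero_left)
  finally show ?thesis .
qed

lemma neg_id[simp]: "- (x::'a) = x"
  using add_self[of x] unfolding add_eq_0_iff by simp

lemma minus_plus: "(x::'a) - y = x + y"
  by (simp add: diff_conv_add_uminus)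

lemma sq_add: "((x::'a) + y) ^ 2 = x ^ 2 + y ^ 2"
  unfolding power2_sum by (simp only: two0 mult_zero_left add_0_right)

lemma pow2k_add: "((x::'a) + y) ^ (2 ^ k) = x ^ (2 ^ k) + y ^ (2 ^ k)"
proof (induction k)
  case 0 then show ?case by simp
next
  case (Suc k)
  have "(x + y) ^ (2 ^ Suc k) = ((x + y) ^ (2 ^ k)) ^ 2" by (simp add: power_mult[symmetric] mult.commute)
  also have "\<dots> = (x ^ (2 ^ k)) ^ 2 + (y ^ (2 ^ k)) ^ 2" using Suc by (simp add: sq_add)
  also have "\<dots> = x ^ (2 ^ Suc k) + y ^ (2 ^ Suc k)" by (simp add: power_mult[symmetric] mult.commute)
  finally show ?case .
qed

lemma frob_add: "((x::'a) + y) ^ q = x ^ q + y ^ q"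
  using pow2k_add qdef by simp

lemma q_ge2: "q \<ge> 2"
proof -
  have "(2::nat) ^ 1 \<le> 2 ^ n" using n1 by (intro power_increasing) auto
  thus ?thesis using qdef by simp
qed

lemma q_pos: "q > 0" using q_ge2 by simp

lemma frob_0[simp]: "(0::'a) ^ q = 0" using q_pos by simp

lemma fermat_aux:
  assumes "(x::'a) \<noteq> 0" shows "x ^ (card (UNIV::'a set) - 1) = 1"
proof -
  let ?A = "UNIV - {0::'a}"
  have bij: "(*) x ` ?A = ?A"
  proof
    show "(*) x ` ?A \<subseteq> ?A" using assms by auto
    show "?A \<subseteq> (*) x ` ?A"
    proof
      fix y assume "y \<in> ?A"
      hence "y = x * (y / x)" "y / x \<in> ?A" using assms by auto
      thus "y \<in> (*) x ` ?A" by blast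
    qed
  qed
  have "prod (\<lambda>y. y) ?A = prod (\<lambda>y. y) ((*) x ` ?A)" using bij by simp
  also have "\<dots> = prod (\<lambda>y. x * y) ?A" using assms by (subst prod.reindex) (auto simp: inj_on_def)
  also have "\<dots> = x ^ card ?A * prod (\<lambda>y. y) ?A" by (simp add: prod.distrib)
  finally have "x ^ card ?A = 1" by (simp add: prod_zero_iff)
  moreover have "card ?A = card (UNIV::'a set) - 1" by (simp add: card_Diff_singleton)
  ultimately show ?thesis by simp
qed

lemma fermat: "(x::'a) ^ (q * q) = x"
proof (cases "x = 0")
  case True thus ?thesis using q_pos by simp
next
  case False
  have c: "card (UNIV::'a set) = Suc (card (UNIV::'a set) - 1)" using cardF q_pos by simp
  have "x ^ (q * q) = x ^ (Suc (card (UNIV::'a set) - 1))" using cardF c by (simp add: power2_eq_square)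
  also have "\<dots> = x" using fermat_aux[OF False] by simp
  finally show ?thesis .
qed

lemma qq[simp]: "((x::'a) ^ q) ^ q = x"
  by (simp add: power_mult[symmetric] fermat)

lemma mem_Fq: "(x::'a) \<in> FQ \<longleftrightarrow> x ^ q = x" by (simp add: Fq_def)

lemma Fq_0[simp]: "0 \<in> FQ" and Fq_1[simp]: "1 \<in> FQ"
  by (auto simp: mem_Fq)

lemma Fq_add[simp]: "x \<in> FQ \<Longrightarrow> y \<in> FQ \<Longrightarrow> x + y \<in> FQ"
  by (simp add: mem_Fq frob_add)

lemma Fq_mult[simp]: "x \<in> FQ \<Longrightarrow> y \<in> FQ \<Longrightarrow> x * y \<in> FQ"
  by (simp add: mem_Fq power_mult_distrib)

lemma Fq_inv[simp]: "x \<in> FQ \<Longrightarrow> inverse x \<in> FQ"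
  by (simp add: mem_Fq power_inverse)

lemma Fq_div[simp]: "x \<in> FQ \<Longrightarrow> y \<in> FQ \<Longrightarrow> x / y \<in> FQ"
  by (simp add: mem_Fq power_divide)

lemma Fq_frob[simp]: "x \<in> FQ \<Longrightarrow> x ^ q = x" by (simp add: mem_Fq)

lemma Fq_pow[simp]: assumes "x \<in> FQ" shows "x ^ k \<in> FQ"
proof -
  have "(x ^ k) ^ q = (x ^ q) ^ k" by (simp add: power_mult[symmetric] mult.commute)
  thus ?thesis using assms by (simp add: mem_Fq)
qed

definition tr :: "'a \<Rightarrow> 'a" where "tr x = x + x ^ q"

lemma tr_Fq[simp]: "tr x \<in> FQ"
  by (simp add: tr_def mem_Fq frob_add add.commute)

lemma tr_add: "tr (x + y) = tr x + tr y"
  by (simp add: tr_def frob_add algebra_simps)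

lemma tr_smult: "c \<in> FQ \<Longrightarrow> tr (c * x) = c * tr x"
  by (simp add: tr_def power_mult_distrib algebra_simps)

lemma tr_zero_iff: "tr x = 0 \<longleftrightarrow> x \<in> FQ"
  by (simp add: tr_def mem_Fq) (metis add_self add_eq_0_iff neg_id)

lemma tr_1[simp]: "tr 1 = 0" by (simp add: tr_def)

lemma tr_Fq_elt: "x \<in> FQ \<Longrightarrow> tr x = 0" by (simp add: tr_zero_iff)

lemma sq_inj: "(x::'a) ^ 2 = y ^ 2 \<Longrightarrow> x = y"
proof -
  assume "x ^ 2 = y ^ 2"
  hence "(x + y) ^ 2 = 0" by (simp add: sq_add)
  hence "x + y = 0" by simp
  thus ?thesis unfolding add_eq_0_iff by simp
qed

definition sr :: "'a \<Rightarrow> 'a" where "sr x = x ^ (2 ^ (2 * n - 1))"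

lemma sr_sq[simp]: "(sr x) ^ 2 = x"
proof -
  have e: "2 * n = Suc (2 * n - 1)" using n1 by simp
  have "(2::nat) ^ (2 * n - 1) * 2 = 2 ^ (2 * n)" by (subst (2) e) simp
  hence "(sr x) ^ 2 = x ^ (2 ^ (2 * n))" by (simp add: sr_def power_mult[symmetric])
  also have "\<dots> = x ^ (q * q)" by (simp add: qdef power_mult[symmetric] mult_2 power_add)
  finally show ?thesis by (simp add: fermat)
qed

lemma sr_unique: "y ^ 2 = x \<Longrightarrow> y = sr x"
  by (rule sq_inj) simp

lemma sr_of_sq[simp]: "sr (x ^ 2) = x"
  by (rule sr_unique[symmetric]) simp

lemma sr_add: "sr (x + y) = sr x + sr y"
  by (simp add: sr_def pow2k_add)

lemma sr_mult: "sr (x * y) = sr x * sr y"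
  by (simp add: sr_def power_mult_distrib)

lemma sr_0[simp]: "sr 0 = 0" and sr_1[simp]: "sr 1 = 1"
  by (simp_all add: sr_def)

lemma sr_Fq[simp]: "x \<in> FQ \<Longrightarrow> sr x \<in> FQ"
  by (simp add: sr_def)

lemma sr_eq0_iff[simp]: "sr x = 0 \<longleftrightarrow> x = 0"
proof
  assume "sr x = 0"
  hence "(sr x) ^ 2 = 0" by simp
  thus "x = 0" by simp
qed simp

lemma tr_sq: "tr (x ^ 2) = (tr x) ^ 2"
  by (simp add: tr_def sq_add power_mult[symmetric] mult.commute)

lemma sr_tr_sq: "sr (tr (x ^ 2)) = tr x"
  by (simp add: tr_sq)

lemma w_ne0[simp]: "w \<noteq> 0" using w_nFq by auto

lemma indep_1_lam:
  assumes "lam \<notin> FQ" "a \<in> FQ" "b \<in> FQ" "a + b * lam = 0" shows "a = 0 \<and> b = 0"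
proof (cases "b = 0")
  case True thus ?thesis using assms by simp
next
  case False
  have "b * lam = a" using assms(4) unfolding add_eq_0_iff by simp
  hence "lam = a / b" using False by (simp add: field_simps)
  thus ?thesis using assms False by simp
qed

lemma inj_lam:
  assumes "lam \<notin> FQ"
  shows "inj_on (\<lambda>(a, b). a + b * lam) (FQ \<times> FQ)"
proof (rule inj_onI, clarsimp)
  fix a b a' b' assume h: "a \<in> FQ" "b \<in> FQ" "a' \<in> FQ" "b' \<in> FQ" "a + b * lam = a' + b' * lam"
  hence "(a + b * lam) + (a' + b' * lam) = 0" by simp
  hence "(a + a') + (b + b') * lam = 0" by (simp add: algebra_simps)
  from indep_1_lam[OF assms _ _ this] h have "a + a' = 0" "b + b' = 0" by auto
  thus "a = a' \<and> b = b'" unfolding add_eq_0_iff by simp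
qed

lemma card_Fq: "card (FQ :: 'a set) = q"
proof -
  let ?c = "card (FQ :: 'a set)"
  have i1: "inj (\<lambda>x::'a. (tr x, tr (w * x)))"
  proof (rule injI)
    fix x y :: 'a assume "(tr x, tr (w * x)) = (tr y, tr (w * y))"
    hence "tr (x + y) = 0" "tr (w * (x + y)) = 0" by (simp_all add: tr_add algebra_simps)
    hence h: "x + y \<in> FQ" "w * (x + y) \<in> FQ" by (simp_all add: tr_zero_iff)
    have "x + y = 0"
    proof (rule ccontr)
      assume F: "x + y \<noteq> 0"
      have "w * (x + y) / (x + y) \<in> FQ" by (rule Fq_div[OF h(2) h(1)])
      hence "w \<in> FQ" using F by simp
      thus False using w_nFq by simp
    qed
    thus "x = y" unfolding add_eq_0_iff by simp
  qed
  have "card (UNIV::'a set) \<le> card (FQ \<times> (FQ :: 'a set))"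
    by (rule card_inj_on_le[OF i1[THEN inj_on_subset, OF subset_UNIV]]) auto
  hence le1: "q ^ 2 \<le> ?c ^ 2" using cardF by (simp add: card_cartesian_product power2_eq_square)
  have "card (FQ \<times> (FQ :: 'a set)) \<le> card (UNIV::'a set)"
    by (rule card_inj_on_le[OF inj_lam[OF w_nFq]]) auto
  hence le2: "?c ^ 2 \<le> q ^ 2" using cardF by (simp add: card_cartesian_product power2_eq_square)
  from le1 le2 have "?c ^ 2 = q ^ 2" by simp
  thus ?thesis using power2_eq_imp_eq[of ?c q] by simp
qed

lemma span_lam:
  assumes "lam \<notin> FQ"
  shows "\<exists>a b. a \<in> FQ \<and> b \<in> FQ \<and> x = a + b * lam"
proof -
  have "card ((\<lambda>(a, b). a + b * lam) ` (FQ \<times> FQ)) = card (UNIV::'a set)"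
    using card_image[OF inj_lam[OF assms]] card_Fq cardF by (simp add: card_cartesian_product power2_eq_square)
  hence "(\<lambda>(a, b). a + b * lam) ` (FQ \<times> FQ) = UNIV"
    by (simp add: card_subset_eq)
  hence "x \<in> (\<lambda>(a, b). a + b * lam) ` (FQ \<times> FQ)" by simp
  thus ?thesis by auto
qed

end


lemma mk6_apply[simp]:
  "mk6 a1 a2 a3 a4 a5 a6 1 = a1" "mk6 a1 a2 a3 a4 a5 a6 (Suc 0) = a1" "mk6 a1 a2 a3 a4 a5 a6 2 = a2" "mk6 a1 a2 a3 a4 a5 a6 3 = a3"
  "mk6 a1 a2 a3 a4 a5 a6 4 = a4" "mk6 a1 a2 a3 a4 a5 a6 5 = a5" "mk6 a1 a2 a3 a4 a5 a6 6 = a6"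
  by (simp_all add: mk6_def)

lemma mk6_eq_iff:
  "mk6 a1 a2 a3 a4 a5 a6 = mk6 b1 b2 b3 b4 b5 b6 \<longleftrightarrow>
    a1 = b1 \<and> a2 = b2 \<and> a3 = b3 \<and> a4 = b4 \<and> a5 = b5 \<and> a6 = b6"
  (is "?L \<longleftrightarrow> ?R")
proof
  assume ?L
  hence "\<And>i. mk6 a1 a2 a3 a4 a5 a6 i = mk6 b1 b2 b3 b4 b5 b6 i" by simp
  from this[of 1] this[of 2] this[of 3] this[of 4] this[of 5] this[of 6] show ?R by simp
qed simp

lemma mk6_smul: "(\<lambda>i. (k::'a::field) * mk6 a1 a2 a3 a4 a5 a6 i) = mk6 (k*a1) (k*a2) (k*a3) (k*a4) (k*a5) (k*a6)"
  by (simp add: mk6_def fun_eq_iff)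

lemma lin3_mk6: "lin3 (mk6 u1 u2 u3 u4 u5 u6) (mk6 v1 v2 v3 v4 v5 v6) (mk6 w1 w2 w3 w4 w5 w6) a b c =
  mk6 (a*u1+b*v1+c*w1) (a*u2+b*v2+c*w2) (a*u3+b*v3+c*w3) (a*u4+b*v4+c*w4) (a*u5+b*v5+c*w5) (a*u6+b*v6+c*w6)"
  by (simp add: mk6_def lin3_def fun_eq_iff)

lemma mk6_zero_iff: "mk6 a1 a2 a3 a4 a5 a6 = (\<lambda>_. 0) \<longleftrightarrow> a1 = 0 \<and> a2 = 0 \<and> a3 = 0 \<and> a4 = 0 \<and> a5 = 0 \<and> a6 = 0"
proof -
  have "(\<lambda>_. 0) = mk6 0 0 0 0 0 (0::'a)" by (simp add: mk6_def fun_eq_iff)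
  thus ?thesis by (simp add: mk6_eq_iff)
qed

lemma pt_eq_imp: "pt v = pt v' \<Longrightarrow> \<exists>k. k \<noteq> 0 \<and> v = (\<lambda>i. k * v' i)"
proof -
  assume "pt v = pt v'"
  moreover have "v \<in> pt v" unfolding pt_def by (rule CollectI, rule exI[of _ 1]) simp
  ultimately have "v \<in> pt v'" by simp
  thus ?thesis unfolding pt_def by auto
qed

lemma pt_smul: "(k::'a::field) \<noteq> 0 \<Longrightarrow> pt (\<lambda>i. k * v i) = pt v"
  unfolding pt_def
proof (safe)
  fix c :: 'a assume "k \<noteq> 0" "c \<noteq> 0"
  thus "\<exists>c'. (\<lambda>i. c * (k * v i)) = (\<lambda>i. c' * v i) \<and> c' \<noteq> 0"
    by (intro exI[of _ "c * k"]) (simp add: mult.assoc)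
next
  fix c :: 'a assume "k \<noteq> 0" "c \<noteq> 0"
  thus "\<exists>c'. (\<lambda>i. c * v i) = (\<lambda>i. c' * (k * v i)) \<and> c' \<noteq> 0"
    by (intro exI[of _ "c / k"]) (simp add: mult.assoc)
qed

lemma pt_mem: "x \<in> pt v \<longleftrightarrow> (\<exists>c. c \<noteq> 0 \<and> x = (\<lambda>i. c * v i))"
  unfolding pt_def by auto

context setting begin

definition E :: "'a \<Rightarrow> 'a \<Rightarrow> 'a \<Rightarrow> nat \<Rightarrow> 'a" where
  "E x d z = mk6 x (x ^ q) d (z ^ q) z 0"

lemma E_eq_iff: "E x d z = E x' d' z' \<longleftrightarrow> x = x' \<and> d = d' \<and> z = z'"
  unfolding E_def mk6_eq_iff by auto

lemma E_zero_iff: "E x d z = (\<lambda>_. 0) \<longleftrightarrow> x = 0 \<and> d = 0 \<and> z = 0"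
  unfolding E_def mk6_zero_iff using q_pos by auto

lemma E_apply[simp]: "E x d z 1 = x" "E x d z (Suc 0) = x" "E x d z 2 = x ^ q" "E x d z 3 = d" "E x d z 4 = z ^ q"
  "E x d z 5 = z" "E x d z 6 = 0"
  by (simp_all add: E_def)

lemma E_Sigma: "d \<in> FQ \<Longrightarrow> E x d z \<in> SigmaVecs q"
  unfolding SigmaVecs_def E_def
  by (rule CollectI, rule exI[of _ x], rule exI[of _ "z ^ q"], rule exI[of _ d], rule exI[of _ 0]) simp

lemma Sigma_E: assumes "v \<in> SigmaVecs q" "v 6 = 0"
  shows "\<exists>x d z. v = E x d z \<and> d \<in> FQ"
proof -
  from assms(1) obtain a b d0 d1 where v: "v = mk6 a (a ^ q) d0 b (b ^ q) d1" "d0 \<in> FQ"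
    unfolding SigmaVecs_def by auto
  with assms(2) have "d1 = 0" by simp
  hence "v = E a d0 (b ^ q)" using v by (simp add: E_def)
  thus ?thesis using v by blast
qed

lemma sigma_scalar:
  assumes "y \<in> SigmaVecs q" "y \<noteq> (\<lambda>_. 0)" "(\<lambda>i. k * y i) \<in> SigmaVecs q"
  shows "k \<in> FQ"
proof -
  from assms(1) obtain a b d0 d1 where y: "y = mk6 a (a ^ q) d0 b (b ^ q) d1" "d0 \<in> FQ" "d1 \<in> FQ"
    unfolding SigmaVecs_def by auto
  from assms(3) obtain a' b' d0' d1' where y': "(\<lambda>i. k * y i) = mk6 a' (a' ^ q) d0' b' (b' ^ q) d1'" "d0' \<in> FQ" "d1' \<in> FQ"
    unfolding SigmaVecs_def by auto
  from y'(1) have e: "mk6 (k*a) (k*a^q) (k*d0) (k*b) (k*b^q) (k*d1) = mk6 a' (a' ^ q) d0' b' (b' ^ q) d1'"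
    unfolding y(1) mk6_smul by simp
  hence e1: "k * a = a'" "k * a ^ q = a' ^ q" "k * d0 = d0'" "k * b = b'" "k * b ^ q = b' ^ q" "k * d1 = d1'"
    unfolding mk6_eq_iff by auto
  have nz: "a \<noteq> 0 \<or> d0 \<noteq> 0 \<or> b \<noteq> 0 \<or> d1 \<noteq> 0"
    using assms(2) y(1) q_pos by (auto simp: mk6_zero_iff)
  have fa: "(k * a) ^ q = k * a ^ q" using e1 by simp
  have fb: "(k * b) ^ q = k * b ^ q" using e1 by simp
  have fd0: "(k * d0) ^ q = k * d0" using e1 y'(2) by (simp add: mem_Fq)
  have fd1: "(k * d1) ^ q = k * d1" using e1 y'(3) by (simp add: mem_Fq)
  show ?thesis unfolding mem_Fq
  proof -
    from nz show "k ^ q = k"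
    proof (elim disjE)
      assume "a \<noteq> 0" thus ?thesis using fa by (simp add: power_mult_distrib q_pos)
    next
      assume "d0 \<noteq> 0" thus ?thesis using fd0 y(2) by (simp add: power_mult_distrib mem_Fq)
    next
      assume "b \<noteq> 0" thus ?thesis using fb by (simp add: power_mult_distrib q_pos)
    next
      assume "d1 \<noteq> 0" thus ?thesis using fd1 y(3) by (simp add: power_mult_distrib mem_Fq)
    qed
  qed
qed

lemma frob_lin3: "a \<in> FQ \<Longrightarrow> b \<in> FQ \<Longrightarrow> c \<in> FQ \<Longrightarrow> (a*x+b*y+c*(z::'a)) ^ q = a * x^q + b * y^q + c * z^q"
  by (simp add: frob_add power_mult_distrib)

lemma lin3_Sigma:
  assumes "u \<in> SigmaVecs q" "v \<in> SigmaVecs q" "x \<in> SigmaVecs q" "a \<in> FQ" "b \<in> FQ" "c \<in> FQ"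
  shows "lin3 u v x a b c \<in> SigmaVecs q"
proof -
  from assms(1) obtain a1 b1 d1 e1 where u: "u = mk6 a1 (a1 ^ q) d1 b1 (b1 ^ q) e1" "d1 \<in> FQ" "e1 \<in> FQ"
    unfolding SigmaVecs_def by auto
  from assms(2) obtain a2 b2 d2 e2 where v: "v = mk6 a2 (a2 ^ q) d2 b2 (b2 ^ q) e2" "d2 \<in> FQ" "e2 \<in> FQ"
    unfolding SigmaVecs_def by auto
  from assms(3) obtain a3 b3 d3 e3 where x: "x = mk6 a3 (a3 ^ q) d3 b3 (b3 ^ q) e3" "d3 \<in> FQ" "e3 \<in> FQ"
    unfolding SigmaVecs_def by auto
  show ?thesis unfolding u v x lin3_mk6 SigmaVecs_def
    apply (rule CollectI)
    apply (rule exI[of _ "a*a1+b*a2+c*a3"], rule exI[of _ "a*b1+b*b2+c*b3"])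
    apply (rule exI[of _ "a*d1+b*d2+c*d3"], rule exI[of _ "a*e1+b*e2+c*e3"])
    using assms u v x by (simp add: frob_lin3)
qed

lemma lin3_E:
  assumes "a \<in> FQ" "b \<in> FQ" "c \<in> FQ"
  shows "lin3 (E x1 d1 z1) (E x2 d2 z2) (E x3 d3 z3) a b c = E (a*x1+b*x2+c*x3) (a*d1+b*d2+c*d3) (a*z1+b*z2+c*z3)"
  unfolding E_def lin3_mk6 using assms by (simp add: frob_lin3)

lemma Nv_E: "mk6 0 0 1 0 0 0 = E 0 1 0"
  by (simp add: E_def)

lemma hform_E: "hform q w (E x1 d1 z1) (E x2 d2 z2) = tr (w * (x1 * z2 + x2 * z1))"
  unfolding hform_def tr_def
  by (simp add: frob_add power_mult_distrib algebra_simps)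

lemma hform_smul: "hform q w (\<lambda>i. k * X i) (\<lambda>i. k' * Y i) = k * k' ^ q * hform q w X Y"
  unfolding hform_def by (simp add: power_mult_distrib algebra_simps)

lemma hform_Nv: "hform q w (mk6 0 0 1 0 0 0) Y = (Y 6) ^ q"
  unfolding hform_def by simp

lemma quad_E: "E x d z 3 ^ 2 + E x d z 1 * E x d z 5 + E x d z 2 * E x d z 4 = d ^ 2 + tr (x * z)"
  by (simp add: tr_def power_mult_distrib)

end


lemma lin3_swap12: "lin3 u v x a b c = lin3 v u x b a c" by (simp add: lin3_def algebra_simps)
lemma lin3_swap13: "lin3 u v x a b c = lin3 x v u c b a" by (simp add: lin3_def algebra_simps)

lemma plane_span_swap12: "plane_span q u v x = plane_span q v u x"
  unfolding plane_span_def
  apply (simp only: lin3_swap12[of u v x])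
  apply blast
  done
lemma plane_span_swap13: "plane_span q u v x = plane_span q x v u"
  unfolding plane_span_def
  apply (simp only: lin3_swap13[of u v x])
  apply blast
  done
lemma fq_indep_swap12: "fq_indep q u v x = fq_indep q v u x"
  unfolding fq_indep_def
  apply (simp only: lin3_swap12[of u v x])
  apply blast
  done
lemma fq_indep_swap13: "fq_indep q u v x = fq_indep q x v u"
  unfolding fq_indep_def
  apply (simp only: lin3_swap13[of u v x])
  apply blast
  done

context setting begin

lemma add_eq0: "(x::'a) + y = 0 \<longleftrightarrow> x = y"
  unfolding add_eq_0_iff by auto

definition sm :: "'a \<Rightarrow> 'a \<times> 'a \<Rightarrow> 'a \<times> 'a" where "sm c p = (c * fst p, c * snd p)"
definition pa :: "'a \<times> 'a \<Rightarrow> 'a \<times> 'a \<Rightarrow> 'a \<times> 'a" where "pa p p' = (fst p + fst p', snd p + snd p')"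
definition spanq :: "'a \<times> 'a \<Rightarrow> 'a \<times> 'a \<Rightarrow> ('a \<times> 'a) set" where
  "spanq u v = {pa (sm a u) (sm b v) | a b. a \<in> FQ \<and> b \<in> FQ}"
definition indep :: "'a \<times> 'a \<Rightarrow> 'a \<times> 'a \<Rightarrow> bool" where
  "indep u v \<longleftrightarrow> (\<forall>a b. a \<in> FQ \<and> b \<in> FQ \<and> pa (sm a u) (sm b v) = (0,0) \<longrightarrow> a = 0 \<and> b = 0)"
definition Dt :: "'a \<times> 'a \<Rightarrow> 'a \<times> 'a \<Rightarrow> 'a" where "Dt u v = fst u * snd v + fst v * snd u"
definition ev :: "'a \<Rightarrow> 'a \<times> 'a \<Rightarrow> nat \<Rightarrow> 'a" where "ev x p = E (fst p) x (snd p)"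
definition PL :: "('a \<times> 'a) set \<Rightarrow> (nat \<Rightarrow> 'a) set set" where
  "PL W = {pt (ev x p) | x p. x \<in> FQ \<and> p \<in> W \<and> \<not> (x = 0 \<and> p = (0,0))}"

lemma lin3_inj:
  assumes fi: "fq_indep q u v x" and FQ: "a \<in> FQ" "b \<in> FQ" "c \<in> FQ" "a2 \<in> FQ" "b2 \<in> FQ" "c2 \<in> FQ"
    and eq: "lin3 u v x a b c = lin3 u v x a2 b2 c2"
  shows "a = a2 \<and> b = b2 \<and> c = c2"
proof -
  have "lin3 u v x (a + a2) (b + b2) (c + c2) = (\<lambda>_. 0)"
  proof
    fix i
    have "lin3 u v x (a + a2) (b + b2) (c + c2) i = lin3 u v x a b c i + lin3 u v x a2 b2 c2 i"
      by (simp add: lin3_def algebra_simps)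
    also have "\<dots> = 0" using eq by simp
    finally show "lin3 u v x (a + a2) (b + b2) (c + c2) i = 0" .
  qed
  moreover have "a + a2 \<in> FQ" "b + b2 \<in> FQ" "c + c2 \<in> FQ" using FQ by simp_all
  ultimately have "a + a2 = 0 \<and> b + b2 = 0 \<and> c + c2 = 0" using fi unfolding fq_indep_def by blast
  thus ?thesis by (simp add: add_eq0)
qed

lemma ev_Sigma: "x \<in> FQ \<Longrightarrow> ev x p \<in> SigmaVecs q"
  by (simp add: ev_def E_Sigma)

lemma ev_zero_iff: "ev x p = (\<lambda>_. 0) \<longleftrightarrow> x = 0 \<and> p = (0,0)"
  by (cases p) (auto simp: ev_def E_zero_iff)

lemma ev_smul_eq:
  assumes "(\<lambda>i. k * ev x' p' i) = ev x p"
  shows "fst p = k * fst p' \<and> x = k * x' \<and> snd p = k * snd p'"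
proof -
  have "\<And>i. k * ev x' p' i = ev x p i" using fun_cong[OF assms] by simp
  from this[of 1] this[of 3] this[of 5] show ?thesis by (simp add: ev_def)
qed

lemma lin3_ev:
  assumes "a \<in> FQ" "b \<in> FQ" "c \<in> FQ"
  shows "lin3 (mk6 0 0 1 0 0 0) (ev 0 u) (ev 0 v) a b c = ev a (pa (sm b u) (sm c v))"
  unfolding Nv_E ev_def using assms by (simp add: lin3_E sm_def pa_def)

lemma spanq_0[simp]: "(0,0) \<in> spanq u v"
  unfolding spanq_def by (rule CollectI, rule exI[of _ 0], rule exI[of _ 0]) (simp add: sm_def pa_def)

lemma spanq_sm: "p \<in> spanq u v \<Longrightarrow> k \<in> FQ \<Longrightarrow> sm k p \<in> spanq u v"
  unfolding spanq_def
proof clarsimp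
  fix a b assume "a \<in> FQ" "b \<in> FQ" "k \<in> FQ"
  thus "\<exists>a' b'. sm k (pa (sm a u) (sm b v)) = pa (sm a' u) (sm b' v) \<and> a' \<in> FQ \<and> b' \<in> FQ"
    by (intro exI[of _ "k*a"] exI[of _ "k*b"]) (simp add: sm_def pa_def algebra_simps)
qed

lemma spanq_gen: "a \<in> FQ \<Longrightarrow> b \<in> FQ \<Longrightarrow> pa (sm a u) (sm b v) \<in> spanq u v"
  unfolding spanq_def by blast

lemma indep_nz: "indep u v \<Longrightarrow> a \<in> FQ \<Longrightarrow> b \<in> FQ \<Longrightarrow> pa (sm a u) (sm b v) = (0,0) \<longleftrightarrow> a = 0 \<and> b = 0"
proof
  assume "indep u v" "a \<in> FQ" "b \<in> FQ" "pa (sm a u) (sm b v) = (0,0)"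
  thus "a = 0 \<and> b = 0" unfolding indep_def by blast
next
  assume "a = 0 \<and> b = 0"
  thus "pa (sm a u) (sm b v) = (0,0)" by (simp add: sm_def pa_def)
qed

lemma plane_PL:
  assumes ind: "indep u v"
  shows "plane_span q (mk6 0 0 1 0 0 0) (ev 0 u) (ev 0 v) = PL (spanq u v)"
  unfolding plane_span_def PL_def
proof (intro set_eqI iffI)
  fix P assume "P \<in> {pt (lin3 (mk6 0 0 1 0 0 0) (ev 0 u) (ev 0 v) a b c) |a b c.
      a \<in> FQ \<and> b \<in> FQ \<and> c \<in> FQ \<and> \<not> (a = 0 \<and> b = 0 \<and> c = 0)}"
  then obtain a b c where h: "P = pt (lin3 (mk6 0 0 1 0 0 0) (ev 0 u) (ev 0 v) a b c)" "a \<in> FQ" "b \<in> FQ" "c \<in> FQ"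
    "\<not> (a = 0 \<and> b = 0 \<and> c = 0)" by blast
  hence "P = pt (ev a (pa (sm b u) (sm c v)))" by (simp add: lin3_ev)
  moreover have "\<not> (a = 0 \<and> pa (sm b u) (sm c v) = (0,0))" using h indep_nz[OF ind] by auto
  moreover have "pa (sm b u) (sm c v) \<in> spanq u v" using h spanq_gen by auto
  ultimately show "P \<in> {pt (ev x p) |x p. x \<in> FQ \<and> p \<in> spanq u v \<and> \<not> (x = 0 \<and> p = (0, 0))}"
    using h by blast
next
  fix P assume "P \<in> {pt (ev x p) |x p. x \<in> FQ \<and> p \<in> spanq u v \<and> \<not> (x = 0 \<and> p = (0, 0))}"
  then obtain x p where h: "P = pt (ev x p)" "x \<in> FQ" "p \<in> spanq u v" "\<not> (x = 0 \<and> p = (0, 0))" by blast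
  then obtain b c where p: "p = pa (sm b u) (sm c v)" "b \<in> FQ" "c \<in> FQ" unfolding spanq_def by blast
  have "P = pt (lin3 (mk6 0 0 1 0 0 0) (ev 0 u) (ev 0 v) x b c)" using h p by (simp add: lin3_ev)
  moreover have "\<not> (x = 0 \<and> b = 0 \<and> c = 0)" using h p by (auto simp: sm_def pa_def)
  ultimately show "P \<in> {pt (lin3 (mk6 0 0 1 0 0 0) (ev 0 u) (ev 0 v) a b c) |a b c.
      a \<in> FQ \<and> b \<in> FQ \<and> c \<in> FQ \<and> \<not> (a = 0 \<and> b = 0 \<and> c = 0)}" using h p by blast
qed

lemma fqi_PL:
  assumes ind: "indep u v"
  shows "fq_indep q (mk6 0 0 1 0 0 0) (ev 0 u) (ev 0 v)"
  unfolding fq_indep_def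
proof clarify
  fix a b c assume h: "a \<in> FQ" "b \<in> FQ" "c \<in> FQ" "lin3 (mk6 0 0 1 0 0 0) (ev 0 u) (ev 0 v) a b c = (\<lambda>_. 0)"
  hence "ev a (pa (sm b u) (sm c v)) = (\<lambda>_. 0)" by (simp add: lin3_ev)
  hence "a = 0 \<and> pa (sm b u) (sm c v) = (0,0)" by (simp add: ev_zero_iff)
  thus "a = 0 \<and> b = 0 \<and> c = 0" using indep_nz[OF ind h(2,3)] by simp
qed

lemma PL_sub:
  assumes sub: "PL (spanq u v) \<subseteq> PL (spanq u' v')"
  shows "spanq u v \<subseteq> spanq u' v'"
proof
  fix p assume p: "p \<in> spanq u v"
  show "p \<in> spanq u' v'"
  proof (cases "p = (0,0)")
    case True thus ?thesis by simp
  next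
    case False
    have "pt (ev 0 p) \<in> PL (spanq u v)" unfolding PL_def
      by (rule CollectI, rule exI[of _ 0], rule exI[of _ p]) (simp add: p False)
    hence "pt (ev 0 p) \<in> PL (spanq u' v')" using sub by blast
    then obtain x' p' where h: "pt (ev 0 p) = pt (ev x' p')" "x' \<in> FQ" "p' \<in> spanq u' v'"
      "\<not> (x' = 0 \<and> p' = (0,0))" unfolding PL_def by blast
    from pt_eq_imp[OF h(1)] obtain k where k: "k \<noteq> 0" "ev 0 p = (\<lambda>i. k * ev x' p' i)" by blast
    have nz: "ev x' p' \<noteq> (\<lambda>_. 0)" using h(4) by (simp only: ev_zero_iff) simp
    have "(\<lambda>i. k * ev x' p' i) \<in> SigmaVecs q" unfolding k(2)[symmetric] by (rule ev_Sigma) simp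
    hence "k \<in> FQ" by (rule sigma_scalar[OF ev_Sigma[OF h(2)] nz])
    moreover have "p = sm k p'" using ev_smul_eq[OF k(2)[symmetric]] unfolding sm_def by (simp add: prod_eq_iff)
    ultimately show ?thesis using spanq_sm[OF h(3)] by simp
  qed
qed

lemma PL_eq_iff: "PL (spanq u v) = PL (spanq u' v') \<longleftrightarrow> spanq u v = spanq u' v'"
proof
  assume e: "PL (spanq u v) = PL (spanq u' v')"
  show "spanq u v = spanq u' v'"
    by (rule subset_antisym; rule PL_sub) (simp_all add: e)
qed simp

end


context setting begin

definition good :: "'a \<times> 'a \<Rightarrow> 'a \<times> 'a \<Rightarrow> bool" where
  "good u v \<longleftrightarrow> indep u v \<and> tr (w * Dt u v) = 0"

lemma Dt_span: "Dt (pa (sm a u) (sm b v)) (pa (sm a' u) (sm b' v)) = (a * b' + a' * b) * Dt u v"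
proof -
  obtain u1 u2 v1 v2 where uv: "u = (u1, u2)" "v = (v1, v2)" by (cases u, cases v) auto
  let ?t = "a * a' * u1 * u2 + b * b' * v1 * v2"
  have "Dt (pa (sm a u) (sm b v)) (pa (sm a' u) (sm b' v)) = (a * b' + a' * b) * Dt u v + (?t + ?t)"
    unfolding uv Dt_def pa_def sm_def by (simp only: fst_conv snd_conv) algebra
  thus ?thesis by simp
qed

lemma hform_ev: "hform q w (ev x p) (ev x' p') = tr (w * Dt p p')"
  unfolding ev_def Dt_def by (simp add: hform_E)

lemma Nv_ev: "mk6 0 0 1 0 0 0 = ev 1 (0, 0)"
  by (simp add: ev_def Nv_E)

lemma Nv_Sigma: "mk6 0 0 1 0 0 (0::'a) \<in> SigmaVecs q"
  unfolding SigmaVecs_def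
  by (rule CollectI, rule exI[of _ 0], rule exI[of _ 0], rule exI[of _ 1], rule exI[of _ 0]) simp

lemma pt_self: "v \<in> pt v"
  unfolding pt_mem by (rule exI[of _ 1]) simp

lemma PL_in_P:
  assumes g: "good u v"
  shows "PL (spanq u v) \<in> WPlanesN q w"
proof -
  have ind: "indep u v" and t: "tr (w * Dt u v) = 0" using g by (auto simp: good_def)
  have sp: "PL (spanq u v) \<in> SigmaPlanes q"
    unfolding SigmaPlanes_def
    apply (rule CollectI)
    apply (rule exI[of _ "mk6 0 0 1 0 0 0"], rule exI[of _ "ev 0 u"], rule exI[of _ "ev 0 v"])
    using plane_PL[OF ind] fqi_PL[OF ind] Nv_Sigma ev_Sigma[of 0] by simp
  have ti: "\<forall>P\<in>PL (spanq u v). \<forall>R\<in>PL (spanq u v). perp q w P R"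
  proof (intro ballI)
    fix P R assume P: "P \<in> PL (spanq u v)" and R: "R \<in> PL (spanq u v)"
    from P obtain x p where Px: "P = pt (ev x p)" "p \<in> spanq u v" unfolding PL_def by blast
    from R obtain x' p' where Rx: "R = pt (ev x' p')" "p' \<in> spanq u v" unfolding PL_def by blast
    from Px(2) obtain a b where p: "p = pa (sm a u) (sm b v)" "a \<in> FQ" "b \<in> FQ" unfolding spanq_def by blast
    from Rx(2) obtain a' b' where p': "p' = pa (sm a' u) (sm b' v)" "a' \<in> FQ" "b' \<in> FQ" unfolding spanq_def by blast
    have h0: "hform q w (ev x p) (ev x' p') = 0"
    proof -
      have "hform q w (ev x p) (ev x' p') = tr ((a * b' + a' * b) * (w * Dt u v))"
        unfolding hform_ev p p' Dt_span by (simp add: algebra_simps)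
      also have "\<dots> = (a * b' + a' * b) * tr (w * Dt u v)" using p p' by (simp add: tr_smult)
      finally show ?thesis using t by simp
    qed
    show "perp q w P R" unfolding perp_def
    proof (intro ballI)
      fix X Y assume XY: "X \<in> P" "Y \<in> R"
      have "X \<in> pt (ev x p)" "Y \<in> pt (ev x' p')" using XY Px(1) Rx(1) by simp_all
      then obtain k k' where "X = (\<lambda>i. k * ev x p i)" "Y = (\<lambda>i. k' * ev x' p' i)"
        unfolding pt_mem by blast
      thus "hform q w X Y = 0" by (simp add: hform_smul h0)
    qed
  qed
  have np: "Npt \<in> PL (spanq u v)"
    unfolding Npt_def PL_def Nv_ev
    by (rule CollectI, rule exI[of _ 1], rule exI[of _ "(0,0)"]) simp
  show ?thesis unfolding WPlanesN_def using sp ti np by blast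
qed

lemma plane_core:
  assumes fi: "fq_indep q (E x1 d1 z1) (E x2 d2 z2) (E x3 d3 z3)"
   and dd: "d1 \<in> FQ" "d2 \<in> FQ" "d3 \<in> FQ"
   and co: "a' \<in> FQ" "b' \<in> FQ" "c' \<in> FQ" "a' \<noteq> 0"
   and rel: "E 0 1 0 = lin3 (E x1 d1 z1) (E x2 d2 z2) (E x3 d3 z3) a' b' c'"
  shows "indep (x2,z2) (x3,z3) \<and> plane_span q (E x1 d1 z1) (E x2 d2 z2) (E x3 d3 z3) = PL (spanq (x2,z2) (x3,z3))"
proof -
  let ?U = "E x1 d1 z1" and ?V = "E x2 d2 z2" and ?X = "E x3 d3 z3"
  from rel have r: "a'*x1+b'*x2+c'*x3 = 0" "a'*d1+b'*d2+c'*d3 = 1" "a'*z1+b'*z2+c'*z3 = 0"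
    unfolding lin3_E[OF co(1-3)] E_eq_iff by auto
  have r1: "a' * x1 = b'*x2 + c'*x3" using r(1) unfolding add.assoc add_eq0 .
  have r3: "a' * z1 = b'*z2 + c'*z3" using r(3) unfolding add.assoc add_eq0 .
  have ind: "indep (x2,z2) (x3,z3)"
    unfolding indep_def
  proof (intro allI impI)
    fix be ga assume h: "be \<in> FQ \<and> ga \<in> FQ \<and> pa (sm be (x2, z2)) (sm ga (x3, z3)) = (0, 0)"
    hence bg: "be \<in> FQ" "ga \<in> FQ" "be * x2 + ga * x3 = 0" "be * z2 + ga * z3 = 0"
      by (auto simp: pa_def sm_def)
    define s where "s = be * d2 + ga * d3"
    have sF: "s \<in> FQ" using bg dd by (simp add: s_def)
    have "lin3 ?U ?V ?X 0 be ga = E 0 s 0"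
      unfolding lin3_E[OF Fq_0 bg(1,2)] E_eq_iff s_def using bg by simp
    also have "\<dots> = lin3 ?U ?V ?X (s * a') (s * b') (s * c')"
      unfolding lin3_E[OF Fq_mult[OF sF co(1)] Fq_mult[OF sF co(2)] Fq_mult[OF sF co(3)]] E_eq_iff
    proof (intro conjI)
      show "0 = s * a' * x1 + s * b' * x2 + s * c' * x3" using r(1) by algebra
      show "s = s * a' * d1 + s * b' * d2 + s * c' * d3" using r(2) by algebra
      show "0 = s * a' * z1 + s * b' * z2 + s * c' * z3" using r(3) by algebra
    qed
    finally have "0 = s * a' \<and> be = s * b' \<and> ga = s * c'"
      by (rule lin3_inj[OF fi Fq_0 bg(1,2) Fq_mult[OF sF co(1)] Fq_mult[OF sF co(2)] Fq_mult[OF sF co(3)]])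
    hence "s = 0" using co(4) by simp
    thus "be = 0 \<and> ga = 0" using \<open>0 = s * a' \<and> be = s * b' \<and> ga = s * c'\<close> by simp
  qed
  have eq: "plane_span q ?U ?V ?X = PL (spanq (x2,z2) (x3,z3))"
    unfolding plane_span_def PL_def
  proof (intro set_eqI iffI)
    fix P assume "P \<in> {pt (lin3 ?U ?V ?X a b c) |a b c. a \<in> FQ \<and> b \<in> FQ \<and> c \<in> FQ \<and> \<not> (a = 0 \<and> b = 0 \<and> c = 0)}"
    then obtain a b c where h: "P = pt (lin3 ?U ?V ?X a b c)" "a \<in> FQ" "b \<in> FQ" "c \<in> FQ"
      "\<not> (a = 0 \<and> b = 0 \<and> c = 0)" by blast
    define s where "s = a * d1 + b * d2 + c * d3"
    define be where "be = b + a * b' * inverse a'"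
    define ga where "ga = c + a * c' * inverse a'"
    have ia: "a' * inverse a' = 1" using co(4) by simp
    have sF: "s \<in> FQ" "be \<in> FQ" "ga \<in> FQ" using h dd co by (simp_all add: s_def be_def ga_def)
    have L: "lin3 ?U ?V ?X a b c = ev s (pa (sm be (x2,z2)) (sm ga (x3,z3)))"
      unfolding lin3_E[OF h(2-4)] ev_def E_eq_iff
    proof (simp add: pa_def sm_def, intro conjI)
      show "a * x1 + b * x2 + c * x3 = be * x2 + ga * x3" unfolding be_def ga_def using ia r1 by algebra
      show "a * d1 + b * d2 + c * d3 = s" by (simp add: s_def)
      show "a * z1 + b * z2 + c * z3 = be * z2 + ga * z3" unfolding be_def ga_def using ia r3 by algebra
    qed
    have nz: "\<not> (s = 0 \<and> pa (sm be (x2,z2)) (sm ga (x3,z3)) = (0,0))"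
    proof
      assume "s = 0 \<and> pa (sm be (x2,z2)) (sm ga (x3,z3)) = (0,0)"
      hence "lin3 ?U ?V ?X a b c = ev 0 (0,0)" using L by simp
      also have "\<dots> = lin3 ?U ?V ?X 0 0 0" by (simp add: lin3_def ev_def E_def mk6_def fun_eq_iff)
      finally have "a = 0 \<and> b = 0 \<and> c = 0" by (rule lin3_inj[OF fi h(2-4) Fq_0 Fq_0 Fq_0])
      thus False using h(5) by simp
    qed
    have "pa (sm be (x2,z2)) (sm ga (x3,z3)) \<in> spanq (x2,z2) (x3,z3)" by (rule spanq_gen[OF sF(2,3)])
    moreover have "P = pt (ev s (pa (sm be (x2,z2)) (sm ga (x3,z3))))" using h(1) L by simp
    ultimately show "P \<in> {pt (ev x p) |x p. x \<in> FQ \<and> p \<in> spanq (x2, z2) (x3, z3) \<and> \<not> (x = 0 \<and> p = (0, 0))}"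
      using nz sF(1) by (intro CollectI exI[of _ s] exI[of _ "pa (sm be (x2,z2)) (sm ga (x3,z3))"]) simp
  next
    fix P assume "P \<in> {pt (ev x p) |x p. x \<in> FQ \<and> p \<in> spanq (x2, z2) (x3, z3) \<and> \<not> (x = 0 \<and> p = (0, 0))}"
    then obtain y p where h: "P = pt (ev y p)" "y \<in> FQ" "p \<in> spanq (x2, z2) (x3, z3)" "\<not> (y = 0 \<and> p = (0, 0))"
      by blast
    from h(3) obtain be ga where p: "p = pa (sm be (x2,z2)) (sm ga (x3,z3))" "be \<in> FQ" "ga \<in> FQ"
      unfolding spanq_def by blast
    define s0 where "s0 = be * d2 + ga * d3"
    define t where "t = y + s0"
    have tF: "t \<in> FQ" using h(2) p dd by (simp add: t_def s0_def)
    have cF: "t * a' \<in> FQ" "be + t * b' \<in> FQ" "ga + t * c' \<in> FQ" using tF p co by simp_all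
    have L: "lin3 ?U ?V ?X (t * a') (be + t * b') (ga + t * c') = ev y p"
      unfolding lin3_E[OF cF] ev_def p(1) E_eq_iff
    proof (simp add: pa_def sm_def, intro conjI)
      show "t * a' * x1 + (be + t * b') * x2 + (ga + t * c') * x3 = be * x2 + ga * x3" using r(1) by algebra
      have "t * a' * d1 + (be + t * b') * d2 + (ga + t * c') * d3 = t * (a'*d1+b'*d2+c'*d3) + s0"
        unfolding s0_def by algebra
      also have "\<dots> = y + (s0 + s0)" using r(2) by (simp add: t_def add.assoc)
      finally show "t * a' * d1 + (be + t * b') * d2 + (ga + t * c') * d3 = y" by simp
      show "t * a' * z1 + (be + t * b') * z2 + (ga + t * c') * z3 = be * z2 + ga * z3" using r(3) by algebra
    qed
    have nz: "\<not> (t * a' = 0 \<and> be + t * b' = 0 \<and> ga + t * c' = 0)"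
    proof
      assume a: "t * a' = 0 \<and> be + t * b' = 0 \<and> ga + t * c' = 0"
      hence "t = 0" using co(4) by simp
      hence "be = 0" "ga = 0" using a by simp_all
      hence "p = (0,0)" "s0 = 0" using p by (simp_all add: pa_def sm_def s0_def)
      moreover have "y = 0" using \<open>t = 0\<close> \<open>s0 = 0\<close> by (simp add: t_def)
      ultimately show False using h(4) by simp
    qed
    show "P \<in> {pt (lin3 ?U ?V ?X a b c) |a b c. a \<in> FQ \<and> b \<in> FQ \<and> c \<in> FQ \<and> \<not> (a = 0 \<and> b = 0 \<and> c = 0)}"
      using h(1) L nz cF by (intro CollectI exI[of _ "t * a'"] exI[of _ "be + t * b'"] exI[of _ "ga + t * c'"]) simp
  qed
  show ?thesis using ind eq by simp
qed

end


context setting begin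

lemma perp_Npt: assumes "perp q w Npt (pt y)" shows "y 6 = 0"
proof -
  have "hform q w (mk6 0 0 1 0 0 0) y = 0" using assms pt_self unfolding perp_def Npt_def by blast
  hence "(y 6) ^ q = 0" by (simp add: hform_Nv)
  thus ?thesis by simp
qed

lemma spanq_left: "u \<in> spanq u v"
proof -
  have "pa (sm 1 u) (sm 0 v) = u" by (cases u, cases v) (simp add: sm_def pa_def)
  thus ?thesis using spanq_gen[OF Fq_1 Fq_0, of u v] by simp
qed

lemma spanq_right: "v \<in> spanq u v"
proof -
  have "pa (sm 0 u) (sm 1 v) = v" by (cases u, cases v) (simp add: sm_def pa_def)
  thus ?thesis using spanq_gen[OF Fq_0 Fq_1, of u v] by simp
qed

lemma indep_left_nz: "indep u v \<Longrightarrow> u \<noteq> (0,0)"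
proof
  assume i: "indep u v" and u0: "u = (0,0)"
  have "pa (sm 1 u) (sm 0 v) = (0,0)" using u0 by (simp add: sm_def pa_def)
  hence "(1::'a) = 0 \<and> (0::'a) = 0" using i[unfolded indep_def, rule_format, of 1 0] by simp
  thus False by simp
qed

lemma pa_comm: "pa x y = pa y x" by (simp add: pa_def add.commute)

lemma indep_sym: "indep u v \<Longrightarrow> indep v u"
  unfolding indep_def
proof (intro allI impI)
  fix a b assume i: "\<forall>a b. a \<in> FQ \<and> b \<in> FQ \<and> pa (sm a u) (sm b v) = (0, 0) \<longrightarrow> a = 0 \<and> b = 0"
    and h: "a \<in> FQ \<and> b \<in> FQ \<and> pa (sm a v) (sm b u) = (0, 0)"
  hence "pa (sm b u) (sm a v) = (0,0)" using pa_comm by metis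
  thus "a = 0 \<and> b = 0" using i h by blast
qed

lemma indep_right_nz: "indep u v \<Longrightarrow> v \<noteq> (0,0)"
  by (rule indep_left_nz[OF indep_sym])

lemma pt_ev0_PL: "p \<in> W \<Longrightarrow> p \<noteq> (0,0) \<Longrightarrow> pt (ev 0 p) \<in> PL W"
  unfolding PL_def by (intro CollectI exI[of _ 0] exI[of _ p]) simp

lemma P_PL:
  assumes "pi \<in> WPlanesN q w" shows "\<exists>u v. good u v \<and> pi = PL (spanq u v)"
proof -
  from assms have sp: "pi \<in> SigmaPlanes q" and ti: "\<forall>P\<in>pi. \<forall>R\<in>pi. perp q w P R" and np: "Npt \<in> pi"
    unfolding WPlanesN_def by auto
  from sp obtain u v x where uvx: "pi = plane_span q u v x" "u \<in> SigmaVecs q" "v \<in> SigmaVecs q"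
    "x \<in> SigmaVecs q" "fq_indep q u v x" unfolding SigmaPlanes_def by blast
  have inpl: "\<And>a b c. a \<in> FQ \<Longrightarrow> b \<in> FQ \<Longrightarrow> c \<in> FQ \<Longrightarrow> \<not> (a = 0 \<and> b = 0 \<and> c = 0) \<Longrightarrow>
      pt (lin3 u v x a b c) \<in> pi"
    unfolding uvx(1) plane_span_def by blast
  have "lin3 u v x 1 0 0 = u" "lin3 u v x 0 1 0 = v" "lin3 u v x 0 0 1 = x" by (simp_all add: lin3_def)
  hence ins: "pt u \<in> pi" "pt v \<in> pi" "pt x \<in> pi"
    using inpl[of 1 0 0] inpl[of 0 1 0] inpl[of 0 0 1] by simp_all
  have z6: "u 6 = 0" "v 6 = 0" "x 6 = 0" using ins ti np perp_Npt by blast+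
  obtain x1 d1 z1 where U: "u = E x1 d1 z1" "d1 \<in> FQ" using Sigma_E[OF uvx(2) z6(1)] by blast
  obtain x2 d2 z2 where V: "v = E x2 d2 z2" "d2 \<in> FQ" using Sigma_E[OF uvx(3) z6(2)] by blast
  obtain x3 d3 z3 where X: "x = E x3 d3 z3" "d3 \<in> FQ" using Sigma_E[OF uvx(4) z6(3)] by blast
  from np obtain a b c where abc: "Npt = pt (lin3 u v x a b c)" "a \<in> FQ" "b \<in> FQ" "c \<in> FQ"
    "\<not> (a = 0 \<and> b = 0 \<and> c = 0)" unfolding uvx(1) plane_span_def by blast
  from pt_eq_imp[OF abc(1)[unfolded Npt_def]] obtain k where
    k: "k \<noteq> 0" "mk6 0 0 1 0 0 0 = (\<lambda>i. k * lin3 u v x a b c i)" by blast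
  have lS: "lin3 u v x a b c \<in> SigmaVecs q" by (rule lin3_Sigma[OF uvx(2-4) abc(2-4)])
  have lnz: "lin3 u v x a b c \<noteq> (\<lambda>_. 0)" using uvx(5) abc(2-5) unfolding fq_indep_def by blast
  have kF: "k \<in> FQ" by (rule sigma_scalar[OF lS lnz]) (simp only: k(2)[symmetric] Nv_Sigma)
  have rel: "E 0 1 0 = lin3 u v x (k * a) (k * b) (k * c)"
    unfolding Nv_E[symmetric] k(2) by (simp add: lin3_def algebra_simps)
  have cF: "k * a \<in> FQ" "k * b \<in> FQ" "k * c \<in> FQ" using kF abc by simp_all
  have nz3: "k * a \<noteq> 0 \<or> k * b \<noteq> 0 \<or> k * c \<noteq> 0" using abc(5) k(1) by simp
  have "\<exists>p p'. indep p p' \<and> pi = PL (spanq p p')"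
  proof -
    from nz3 show ?thesis
    proof (elim disjE)
      assume h: "k * a \<noteq> 0"
      from plane_core[OF uvx(5)[unfolded U(1) V(1) X(1)] U(2) V(2) X(2) cF h rel[unfolded U(1) V(1) X(1)]]
      show ?thesis using uvx(1) U V X by blast
    next
      assume h: "k * b \<noteq> 0"
      have fi: "fq_indep q v u x" using uvx(5) fq_indep_swap12 by blast
      have r: "E 0 1 0 = lin3 v u x (k * b) (k * a) (k * c)" using rel lin3_swap12[of u v x "k*a" "k*b" "k*c"] by simp
      from plane_core[OF fi[unfolded U(1) V(1) X(1)] V(2) U(2) X(2) cF(2,1,3) h r[unfolded U(1) V(1) X(1)]]
      moreover have "pi = plane_span q v u x" using uvx(1) plane_span_swap12[of q u v x] by simp
      ultimately show ?thesis using U V X by blast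
    next
      assume h: "k * c \<noteq> 0"
      have fi: "fq_indep q x v u" using uvx(5) fq_indep_swap13 by blast
      have r: "E 0 1 0 = lin3 x v u (k * c) (k * b) (k * a)" using rel lin3_swap13[of u v x "k*a" "k*b" "k*c"] by simp
      from plane_core[OF fi[unfolded U(1) V(1) X(1)] X(2) V(2) U(2) cF(3,2,1) h r[unfolded U(1) V(1) X(1)]]
      moreover have "pi = plane_span q x v u" using uvx(1) plane_span_swap13[of q u v x] by simp
      ultimately show ?thesis using U V X by blast
    qed
  qed
  then obtain p p' where pp: "indep p p'" "pi = PL (spanq p p')" by blast
  have "pt (ev 0 p) \<in> pi" "pt (ev 0 p') \<in> pi"
    using pp pt_ev0_PL spanq_left spanq_right indep_left_nz indep_right_nz by auto
  hence "perp q w (pt (ev 0 p)) (pt (ev 0 p'))" using ti by blast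
  hence "hform q w (ev 0 p) (ev 0 p') = 0" using pt_self unfolding perp_def by blast
  hence "tr (w * Dt p p') = 0" by (simp add: hform_ev)
  thus ?thesis using pp unfolding good_def by blast
qed

lemma P_char: "WPlanesN q w = {PL (spanq u v) | u v. good u v}"
proof (intro set_eqI iffI)
  fix pi assume "pi \<in> WPlanesN q w"
  from P_PL[OF this] obtain u v where "good u v" "pi = PL (spanq u v)" by blast
  thus "pi \<in> {PL (spanq u v) | u v. good u v}" by blast
next
  fix pi assume "pi \<in> {PL (spanq u v) | u v. good u v}"
  then obtain u v where "good u v" "pi = PL (spanq u v)" by blast
  thus "pi \<in> WPlanesN q w" using PL_in_P by simp
qed

end


context setting begin

lemma quad_ev: "ev x p 3 ^ 2 + ev x p 1 * ev x p 5 + ev x p 2 * ev x p 4 = x ^ 2 + tr (fst p * snd p)"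
  unfolding ev_def by (rule quad_E)

lemma quad_smul: "(c * a) ^ 2 + (c * b) * (c * d) + (c * e) * (c * f) = (c::'a) ^ 2 * (a ^ 2 + b * d + e * f)"
  by algebra

lemma ptQ:
  assumes x: "x \<in> FQ" and nz: "\<not> (x = 0 \<and> p = (0,0))"
  shows "pt (ev x p) \<in> Qpts q \<longleftrightarrow> x ^ 2 = tr (fst p * snd p)"
proof -
  have S: "pt (ev x p) \<in> SigmaPts q"
    unfolding SigmaPts_def using ev_Sigma[OF x, of p] nz by (auto simp: ev_zero_iff)
  have "(\<forall>y\<in>pt (ev x p). y 6 = 0 \<and> y 3 ^ 2 + y 1 * y 5 + y 2 * y 4 = 0) \<longleftrightarrow> x ^ 2 + tr (fst p * snd p) = 0"
  proof
    assume "\<forall>y\<in>pt (ev x p). y 6 = 0 \<and> y 3 ^ 2 + y 1 * y 5 + y 2 * y 4 = 0"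
    hence "ev x p 3 ^ 2 + ev x p 1 * ev x p 5 + ev x p 2 * ev x p 4 = 0" using pt_self by blast
    thus "x ^ 2 + tr (fst p * snd p) = 0" by (simp only: quad_ev)
  next
    assume h: "x ^ 2 + tr (fst p * snd p) = 0"
    show "\<forall>y\<in>pt (ev x p). y 6 = 0 \<and> y 3 ^ 2 + y 1 * y 5 + y 2 * y 4 = 0"
    proof
      fix y assume "y \<in> pt (ev x p)"
      then obtain c where y: "y = (\<lambda>i. c * ev x p i)" unfolding pt_mem by blast
      have "y 3 ^ 2 + y 1 * y 5 + y 2 * y 4 = c ^ 2 * (ev x p 3 ^ 2 + ev x p 1 * ev x p 5 + ev x p 2 * ev x p 4)"
        unfolding y by (rule quad_smul)
      also have "\<dots> = 0" by (simp only: quad_ev h mult_zero_right)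
      finally show "y 6 = 0 \<and> y 3 ^ 2 + y 1 * y 5 + y 2 * y 4 = 0" unfolding y by (simp add: ev_def)
    qed
  qed
  thus ?thesis using S unfolding Qpts_def by (simp add: add_eq0)
qed

lemma tr_0[simp]: "tr 0 = 0" by (simp add: tr_def)

lemma PLQ0: "PL W \<inter> Qpts q = {pt (ev x p) | x p. x \<in> FQ \<and> p \<in> W \<and> \<not> (x = 0 \<and> p = (0,0)) \<and> x ^ 2 = tr (fst p * snd p)}"
proof (intro set_eqI iffI)
  fix P assume "P \<in> PL W \<inter> Qpts q"
  then obtain x p where h: "P = pt (ev x p)" "x \<in> FQ" "p \<in> W" "\<not> (x = 0 \<and> p = (0,0))" "P \<in> Qpts q"
    unfolding PL_def by blast
  hence "x ^ 2 = tr (fst p * snd p)" using ptQ by blast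
  thus "P \<in> {pt (ev x p) | x p. x \<in> FQ \<and> p \<in> W \<and> \<not> (x = 0 \<and> p = (0,0)) \<and> x ^ 2 = tr (fst p * snd p)}"
    using h by blast
next
  fix P assume "P \<in> {pt (ev x p) | x p. x \<in> FQ \<and> p \<in> W \<and> \<not> (x = 0 \<and> p = (0,0)) \<and> x ^ 2 = tr (fst p * snd p)}"
  then obtain x p where h: "P = pt (ev x p)" "x \<in> FQ" "p \<in> W" "\<not> (x = 0 \<and> p = (0,0))" "x ^ 2 = tr (fst p * snd p)"
    by blast
  hence "P \<in> Qpts q" using ptQ by blast
  moreover have "P \<in> PL W" unfolding PL_def using h by blast
  ultimately show "P \<in> PL W \<inter> Qpts q" by blast
qed

definition Qv :: "'a \<times> 'a \<Rightarrow> nat \<Rightarrow> 'a" where "Qv p = ev (sr (tr (fst p * snd p))) p"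

lemma PLQ: "PL W \<inter> Qpts q = {pt (Qv p) | p. p \<in> W \<and> p \<noteq> (0,0)}"
  unfolding PLQ0
proof (intro set_eqI iffI)
  fix P assume "P \<in> {pt (ev x p) | x p. x \<in> FQ \<and> p \<in> W \<and> \<not> (x = 0 \<and> p = (0,0)) \<and> x ^ 2 = tr (fst p * snd p)}"
  then obtain x p where h: "P = pt (ev x p)" "x \<in> FQ" "p \<in> W" "\<not> (x = 0 \<and> p = (0,0))" "x ^ 2 = tr (fst p * snd p)"
    by blast
  have x: "x = sr (tr (fst p * snd p))" using sr_unique[OF h(5)] .
  have "p \<noteq> (0,0)"
  proof
    assume "p = (0,0)"
    hence "x ^ 2 = 0" using h(5) by simp
    thus False using h(4) \<open>p = (0,0)\<close> by simp
  qed
  thus "P \<in> {pt (Qv p) | p. p \<in> W \<and> p \<noteq> (0,0)}" using h x unfolding Qv_def by blast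
next
  fix P assume "P \<in> {pt (Qv p) | p. p \<in> W \<and> p \<noteq> (0,0)}"
  then obtain p where h: "P = pt (Qv p)" "p \<in> W" "p \<noteq> (0,0)" by blast
  show "P \<in> {pt (ev x p) | x p. x \<in> FQ \<and> p \<in> W \<and> \<not> (x = 0 \<and> p = (0,0)) \<and> x ^ 2 = tr (fst p * snd p)}"
    unfolding h(1) Qv_def
    by (intro CollectI exI[of _ "sr (tr (fst p * snd p))"] exI[of _ p]) (simp add: h(2,3))
qed

definition Fline :: "'a \<times> 'a \<Rightarrow> ('a \<times> 'a) set" where "Fline x = {sm l x | l. True}"

definition xt :: "'a option \<Rightarrow> 'a \<times> 'a" where
  "xt tau = (case tau of None \<Rightarrow> (0, 1) | Some t \<Rightarrow> (1, t ^ 2))"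

definition Sp :: "'a option \<Rightarrow> (nat \<Rightarrow> 'a) set set" where
  "Sp tau = (case tau of None \<Rightarrow> Sline_inf q | Some t \<Rightarrow> Sline q t)"

lemma Sline_vec: "mk6 l (l ^ q) (l * t + l ^ q * t ^ q) (l ^ q * t ^ (2 * q)) (l * t ^ 2) 0 = Qv (sm l (1, t ^ 2))"
proof -
  have "sr (tr (l * (l * t ^ 2))) = tr (l * t)"
  proof -
    have "l * (l * t ^ 2) = (l * t) ^ 2" by (simp add: power2_eq_square)
    thus ?thesis by (simp add: sr_tr_sq)
  qed
  moreover have "(t ^ 2) ^ q = t ^ (2 * q)" by (simp add: power_mult)
  ultimately show ?thesis
    unfolding Qv_def ev_def E_def sm_def by (simp add: tr_def power_mult_distrib)
qed

lemma Sinf_vec: "mk6 0 0 0 (l ^ q) l 0 = Qv (sm l (0, 1))"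
  unfolding Qv_def ev_def E_def sm_def by simp

lemma Sp_eq: "Sp tau = {pt (Qv (sm l (xt tau))) | l. l \<noteq> 0}"
proof (cases tau)
  case None thus ?thesis unfolding Sp_def xt_def Sline_inf_def Sinf_vec by simp
next
  case (Some t) thus ?thesis unfolding Sp_def xt_def Sline_def Sline_vec by simp
qed

lemma Spread_eq: "Spread q = range Sp"
proof (intro set_eqI iffI)
  fix L :: "(nat \<Rightarrow> 'a) set set" assume "L \<in> Spread q"
  hence "L = Sp None \<or> (\<exists>t. L = Sp (Some t))" unfolding Spread_def Sp_def by auto
  thus "L \<in> range Sp" by blast
next
  fix L :: "(nat \<Rightarrow> 'a) set set" assume "L \<in> range Sp"
  then obtain tau where "L = Sp tau" by blast
  thus "L \<in> Spread q" unfolding Spread_def Sp_def by (cases tau) auto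
qed

lemma sm_sm: "sm a (sm b p) = sm (a * b) p" by (simp add: sm_def mult.assoc)

lemma sm_zero_iff: "p \<noteq> (0,0) \<Longrightarrow> sm l p = (0,0) \<longleftrightarrow> l = 0"
  by (cases p) (auto simp: sm_def)

lemma Fline_smul: "c \<noteq> 0 \<Longrightarrow> Fline (sm c u) = Fline u"
  unfolding Fline_def
proof (intro set_eqI iffI)
  fix y assume "c \<noteq> 0" "y \<in> {sm l (sm c u) |l. True}"
  thus "y \<in> {sm l u |l. True}" by (auto simp: sm_sm)
next
  fix y assume c: "c \<noteq> 0" and "y \<in> {sm l u |l. True}"
  then obtain l where "y = sm l u" by blast
  hence "y = sm (l / c) (sm c u)" using c by (simp add: sm_sm)
  thus "y \<in> {sm l (sm c u) |l. True}" by blast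
qed

lemma Fline_Q: "p \<noteq> (0,0) \<Longrightarrow> {pt (Qv p') | p'. p' \<in> Fline p \<and> p' \<noteq> (0,0)} = {pt (Qv (sm l p)) | l. l \<noteq> 0}"
  unfolding Fline_def using sm_zero_iff by blast

lemma Fline_xt: assumes "u \<noteq> (0,0)" shows "\<exists>tau. Fline u = Fline (xt tau)"
proof -
  obtain u1 u2 where u: "u = (u1, u2)" by (cases u)
  show ?thesis
  proof (cases "u1 = 0")
    case True
    hence u2: "u2 \<noteq> 0" using assms u by simp
    have "xt None = sm (1 / u2) u" using True u2 u by (simp add: xt_def sm_def)
    hence "Fline u = Fline (xt None)" using Fline_smul[of "1/u2" u] u2 by simp
    thus ?thesis by blast
  next
    case False
    have "xt (Some (sr (u2 / u1))) = sm (1 / u1) u" using False u by (simp add: xt_def sm_def)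
    hence "Fline u = Fline (xt (Some (sr (u2 / u1))))" using Fline_smul[of "1/u1" u] False by simp
    thus ?thesis by blast
  qed
qed

lemma span_Fline:
  assumes ind: "indep u v" and D: "Dt u v = 0"
  shows "spanq u v = Fline u"
proof -
  obtain u1 u2 where u: "u = (u1, u2)" by (cases u)
  obtain v1 v2 where v: "v = (v1, v2)" by (cases v)
  have unz: "u \<noteq> (0,0)" by (rule indep_left_nz[OF ind])
  have D': "u1 * v2 = v1 * u2" using D unfolding Dt_def u v by (simp add: add_eq0)
  obtain lam where lam: "v = sm lam u"
  proof (cases "u1 = 0")
    case True
    hence u2: "u2 \<noteq> 0" using unz u by simp
    have "v1 = 0" using D' True u2 by simp
    hence "v = sm (v2 / u2) u" using True u2 u v by (simp add: sm_def)
    thus ?thesis using that by blast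
  next
    case False
    have "v2 = v1 / u1 * u2" using D' False by (simp add: field_simps)
    hence "v = sm (v1 / u1) u" using False u v by (simp add: sm_def)
    thus ?thesis using that by blast
  qed
  have lnF: "lam \<notin> FQ"
  proof
    assume lF: "lam \<in> FQ"
    have "pa (sm lam u) (sm 1 v) = (0,0)" unfolding lam by (simp add: sm_def pa_def)
    hence "lam = 0 \<and> (1::'a) = 0" using ind[unfolded indep_def, rule_format, of lam 1] lF by simp
    thus False by simp
  qed
  show ?thesis
  proof (intro set_eqI iffI)
    fix p assume "p \<in> spanq u v"
    then obtain a b where "p = pa (sm a u) (sm b v)" unfolding spanq_def by blast
    hence "p = sm (a + b * lam) u" unfolding lam by (simp add: sm_def pa_def algebra_simps)
    thus "p \<in> Fline u" unfolding Fline_def by blast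
  next
    fix p assume "p \<in> Fline u"
    then obtain l where p: "p = sm l u" unfolding Fline_def by blast
    obtain a b where ab: "a \<in> FQ" "b \<in> FQ" "l = a + b * lam" using span_lam[OF lnF, of l] by blast
    have "p = pa (sm a u) (sm b v)" unfolding p lam ab(3) by (simp add: sm_def pa_def algebra_simps)
    thus "p \<in> spanq u v" using spanq_gen[OF ab(1,2)] by simp
  qed
qed

lemma O1_meet:
  assumes g: "good u v" and D: "Dt u v = 0"
  shows "\<exists>tau. PL (spanq u v) \<inter> Qpts q = Sp tau \<and> spanq u v = Fline (xt tau)"
proof -
  have ind: "indep u v" using g by (simp add: good_def)
  obtain tau where t: "Fline u = Fline (xt tau)" using Fline_xt[OF indep_left_nz[OF ind]] by blast
  have xnz: "xt tau \<noteq> (0,0)" by (cases tau) (auto simp: xt_def)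
  have "PL (spanq u v) \<inter> Qpts q = {pt (Qv p) | p. p \<in> Fline (xt tau) \<and> p \<noteq> (0,0)}"
    unfolding PLQ span_Fline[OF ind D] t ..
  also have "\<dots> = Sp tau" unfolding Fline_Q[OF xnz] Sp_eq ..
  finally show ?thesis using span_Fline[OF ind D] t by blast
qed

end


context setting begin

lemma polar_char2: fixes c1 :: 'a shows
  "qf3 c1 c2 c3 c4 c5 c6 (x1+y1) (x2+y2) (x3+y3) - qf3 c1 c2 c3 c4 c5 c6 x1 x2 x3 - qf3 c1 c2 c3 c4 c5 c6 y1 y2 y3
   = c4*(x1*y2+x2*y1) + c5*(x1*y3+x3*y1) + c6*(x2*y3+x3*y2)"
proof -
  have "qf3 c1 c2 c3 c4 c5 c6 (x1+y1) (x2+y2) (x3+y3) - qf3 c1 c2 c3 c4 c5 c6 x1 x2 x3 - qf3 c1 c2 c3 c4 c5 c6 y1 y2 y3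
   = c4*(x1*y2+x2*y1) + c5*(x1*y3+x3*y1) + c6*(x2*y3+x3*y2) + 2 * (c1*x1*y1 + c2*x2*y2 + c3*x3*y3)"
    unfolding qf3_def by algebra
  thus ?thesis by (simp only: two0 mult_zero_left add_0_right)
qed

lemma rad_polar: "c4*(c6*y2+c5*y1) + c5*(c6*y3+c4*y1) + c6*(c5*y3+c4*y2) = (0::'a)"
proof -
  have "c4*(c6*y2+c5*y1) + c5*(c6*y3+c4*y1) + c6*(c5*y3+c4*y2) = 2 * (c4*c6*y2 + c4*c5*y1 + c5*c6*y3)"
    by algebra
  thus ?thesis by (simp only: two0 mult_zero_left)
qed

lemma cramer1:
  assumes F: "p1 \<in> FQ" "p2 \<in> FQ" "p3 \<in> FQ" "r1 \<in> FQ" "r2 \<in> FQ" "r3 \<in> FQ" "c4 \<in> FQ" "c5 \<in> FQ" "c6 \<in> FQ"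
    and rel: "c6*(p2*r3+p3*r2) + c5*(p3*r1+p1*r3) + c4*(p1*r2+p2*r1) = 0"
    and n1: "p2*r3+p3*r2 \<noteq> 0"
  shows "\<exists>s1 s2. s1 \<in> FQ \<and> s2 \<in> FQ \<and> c6 = s1*p1+s2*r1 \<and> c5 = s1*p2+s2*r2 \<and> c4 = s1*p3+s2*r3"
proof -
  define n where "n = p2*r3+p3*r2"
  define ni where "ni = inverse n"
  define s1 where "s1 = (c5*r3+c4*r2) * ni"
  define s2 where "s2 = (p2*c4+p3*c5) * ni"
  have nz: "n \<noteq> 0" using n1 by (simp add: n_def)
  have nni: "n * ni = 1" using nz by (simp add: ni_def)
  have rel': "c6 * n = c5*(p3*r1+p1*r3) + c4*(p1*r2+p2*r1)" using rel unfolding n_def add.assoc add_eq0 .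
  have A: "s1*p1+s2*r1 = c6" unfolding s1_def s2_def using nni rel' by algebra
  have "s1*p2+s2*r2 = c5 + 2 * (ni*c4*p2*r2)" unfolding s1_def s2_def using nni n_def by algebra
  hence B: "s1*p2+s2*r2 = c5" by (simp only: two0 mult_zero_left add_0_right)
  have "s1*p3+s2*r3 = c4 + 2 * (ni*c5*p3*r3)" unfolding s1_def s2_def using nni n_def by algebra
  hence C: "s1*p3+s2*r3 = c4" by (simp only: two0 mult_zero_left add_0_right)
  have "s1 \<in> FQ" "s2 \<in> FQ" using F unfolding s1_def s2_def ni_def n_def by simp_all
  thus ?thesis using A B C by (intro exI[of _ s1] exI[of _ s2]) simp
qed

definition ind3 :: "'a \<Rightarrow> 'a \<Rightarrow> 'a \<Rightarrow> 'a \<Rightarrow> 'a \<Rightarrow> 'a \<Rightarrow> bool" where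
  "ind3 p1 p2 p3 r1 r2 r3 \<longleftrightarrow> (\<forall>b c. b \<in> FQ \<and> c \<in> FQ \<and> b*p1+c*r1 = 0 \<and> b*p2+c*r2 = 0 \<and> b*p3+c*r3 = 0 \<longrightarrow> b = 0 \<and> c = 0)"

lemma ind3_perm12: "ind3 p1 p2 p3 r1 r2 r3 \<Longrightarrow> ind3 p2 p1 p3 r2 r1 r3"
  unfolding ind3_def by blast
lemma ind3_perm13: "ind3 p1 p2 p3 r1 r2 r3 \<Longrightarrow> ind3 p3 p2 p1 r3 r2 r1"
  unfolding ind3_def by blast

lemma ind3_use: "ind3 p1 p2 p3 r1 r2 r3 \<Longrightarrow> b \<in> FQ \<Longrightarrow> c \<in> FQ \<Longrightarrow> b*p1+c*r1 = 0 \<Longrightarrow> b*p2+c*r2 = 0 \<Longrightarrow> b*p3+c*r3 = 0 \<Longrightarrow> b = 0 \<and> c = 0"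
  unfolding ind3_def by blast

lemma dep1:
  assumes i: "ind3 p1 p2 p3 r1 r2 r3" and F: "p1 \<in> FQ" "r1 \<in> FQ"
    and p1: "p1 \<noteq> 0" and n2: "p3*r1+p1*r3 = 0" and n3: "p1*r2+p2*r1 = 0"
  shows False
proof -
  define b where "b = r1 / p1"
  have bF: "b \<in> FQ" using F by (simp add: b_def)
  have e1: "b*p1+1*r1 = 0" using p1 by (simp add: b_def)
  have "p1 * (b*p2+1*r2) = p1*r2+p2*r1" using p1 by (simp add: b_def field_simps)
  hence e2: "b*p2+1*r2 = 0" using n3 p1 by simp
  have "p1 * (b*p3+1*r3) = p3*r1+p1*r3" using p1 by (simp add: b_def field_simps)
  hence e3: "b*p3+1*r3 = 0" using n2 p1 by simp
  from ind3_use[OF i bF Fq_1 e1 e2 e3] show False by simp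
qed

lemma notdep:
  assumes i: "ind3 p1 p2 p3 r1 r2 r3" and F: "p1 \<in> FQ" "p2 \<in> FQ" "p3 \<in> FQ" "r1 \<in> FQ" "r2 \<in> FQ" "r3 \<in> FQ"
  shows "p2*r3+p3*r2 \<noteq> 0 \<or> p3*r1+p1*r3 \<noteq> 0 \<or> p1*r2+p2*r1 \<noteq> 0"
proof (rule ccontr)
  assume "\<not> ?thesis"
  hence n: "p2*r3+p3*r2 = 0" "p3*r1+p1*r3 = 0" "p1*r2+p2*r1 = 0" by auto
  show False
  proof (cases "p1 = 0")
    case False thus False using dep1[OF i F(1,4) False n(2,3)] by simp
  next
    case p1: True
    show False
    proof (cases "p2 = 0")
      case False
      have "p3*r2+p2*r3 = 0" "p2*r1+p1*r2 = 0" using n by (simp_all add: add.commute)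
      thus False using dep1[OF ind3_perm12[OF i] F(2,5) False] by simp
    next
      case p2: True
      show False
      proof (cases "p3 = 0")
        case False
        have "p1*r3+p3*r1 = 0" "p3*r2+p2*r3 = 0" using n by (simp_all add: add.commute)
        thus False using dep1[OF ind3_perm13[OF i] F(3,6) False] by simp
      next
        case True
        have "(1::'a) = 0 \<and> (0::'a) = 0" by (rule ind3_use[OF i Fq_1 Fq_0]) (simp_all add: p1 p2 True)
        thus False by simp
      qed
    qed
  qed
qed

lemma line_contra:
  assumes cF: "c1 \<in> FQ" "c2 \<in> FQ" "c3 \<in> FQ" "c4 \<in> FQ" "c5 \<in> FQ" "c6 \<in> FQ"
    and ns: "qf3_nonsingular q c1 c2 c3 c4 c5 c6"
    and F: "p1 \<in> FQ" "p2 \<in> FQ" "p3 \<in> FQ" "r1 \<in> FQ" "r2 \<in> FQ" "r3 \<in> FQ"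
    and i: "ind3 p1 p2 p3 r1 r2 r3"
    and z: "\<And>b c. b \<in> FQ \<Longrightarrow> c \<in> FQ \<Longrightarrow> qf3 c1 c2 c3 c4 c5 c6 (b*p1+c*r1) (b*p2+c*r2) (b*p3+c*r3) = 0"
  shows False
proof -
  let ?Q = "qf3 c1 c2 c3 c4 c5 c6"
  have qp: "?Q p1 p2 p3 = 0" using z[OF Fq_1 Fq_0] by simp
  have qr: "?Q r1 r2 r3 = 0" using z[OF Fq_0 Fq_1] by simp
  have qpr: "?Q (p1+r1) (p2+r2) (p3+r3) = 0" using z[OF Fq_1 Fq_1] by simp
  have B0: "c4*(p1*r2+p2*r1) + c5*(p1*r3+p3*r1) + c6*(p2*r3+p3*r2) = 0"
    using polar_char2[of c1 c2 c3 c4 c5 c6 p1 r1 p2 r2 p3 r3] qp qr qpr by simp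
  have rel: "c6*(p2*r3+p3*r2) + c5*(p3*r1+p1*r3) + c4*(p1*r2+p2*r1) = 0"
    using B0 by (simp add: algebra_simps)
  obtain s1 s2 where s: "s1 \<in> FQ" "s2 \<in> FQ" "c6 = s1*p1+s2*r1" "c5 = s1*p2+s2*r2" "c4 = s1*p3+s2*r3"
  proof -
    from notdep[OF i F] show ?thesis
    proof (elim disjE)
      assume n: "p2*r3+p3*r2 \<noteq> 0"
      from cramer1[OF F cF(4-6) rel n] show ?thesis using that by blast
    next
      assume n: "p3*r1+p1*r3 \<noteq> 0"
      have rel': "c5*(p1*r3+p3*r1) + c6*(p3*r2+p2*r3) + c4*(p2*r1+p1*r2) = 0" using rel by (simp add: algebra_simps)
      from cramer1[OF F(2,1,3,5,4,6) cF(4,6,5) rel'] n show ?thesis using that by (simp add: add.commute) blast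
    next
      assume n: "p1*r2+p2*r1 \<noteq> 0"
      have rel': "c4*(p2*r1+p1*r2) + c5*(p1*r3+p3*r1) + c6*(p3*r2+p2*r3) = 0" using rel by (simp add: algebra_simps)
      from cramer1[OF F(3,2,1,6,5,4) cF(6,5,4) rel'] n show ?thesis using that by (simp add: add.commute) blast
    qed
  qed
  have qrad: "?Q c6 c5 c4 = 0" using z[OF s(1,2)] s(3-5) by simp
  show False
  proof (cases "c6 = 0 \<and> c5 = 0 \<and> c4 = 0")
    case False
    then obtain x' y' z' where "x' \<in> FQ" "y' \<in> FQ" "z' \<in> FQ"
      "?Q (c6 + x') (c5 + y') (c4 + z') - ?Q c6 c5 c4 - ?Q x' y' z' \<noteq> 0"
      using ns cF qrad unfolding qf3_nonsingular_def by blast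
    thus False unfolding polar_char2 using rad_polar[of c4 c6 y' c5 x' z'] by (simp add: algebra_simps)
  next
    case True
    have pnz: "\<not> (p1 = 0 \<and> p2 = 0 \<and> p3 = 0)"
    proof
      assume "p1 = 0 \<and> p2 = 0 \<and> p3 = 0"
      hence "(1::'a) = 0 \<and> (0::'a) = 0" by (intro ind3_use[OF i Fq_1 Fq_0]) simp_all
      thus False by simp
    qed
    then obtain x' y' z' where "x' \<in> FQ" "y' \<in> FQ" "z' \<in> FQ"
      "?Q (p1 + x') (p2 + y') (p3 + z') - ?Q p1 p2 p3 - ?Q x' y' z' \<noteq> 0"
      using ns F qp unfolding qf3_nonsingular_def by blast
    thus False unfolding polar_char2 using True by simp
  qed
qed

end


context setting begin

lemma ptev_in_PL:
  assumes x: "x \<in> FQ" and nz: "p \<noteq> (0,0)" and m: "pt (ev x p) \<in> PL (spanq u v)"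
  shows "p \<in> spanq u v"
proof -
  from m obtain x' p' where h: "pt (ev x p) = pt (ev x' p')" "x' \<in> FQ" "p' \<in> spanq u v"
    "\<not> (x' = 0 \<and> p' = (0,0))" unfolding PL_def by blast
  from pt_eq_imp[OF h(1)] obtain k where k: "k \<noteq> 0" "ev x p = (\<lambda>i. k * ev x' p' i)" by blast
  have nz': "ev x' p' \<noteq> (\<lambda>_. 0)" using h(4) by (simp only: ev_zero_iff) simp
  have "(\<lambda>i. k * ev x' p' i) \<in> SigmaVecs q" unfolding k(2)[symmetric] by (rule ev_Sigma[OF x])
  hence "k \<in> FQ" by (rule sigma_scalar[OF ev_Sigma[OF h(2)] nz'])
  moreover have "p = sm k p'" using ev_smul_eq[OF k(2)[symmetric]] unfolding sm_def by (simp add: prod_eq_iff)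
  ultimately show ?thesis using spanq_sm[OF h(3)] by simp
qed

lemma Qv_Sigma: "Qv p \<in> SigmaVecs q"
  unfolding Qv_def by (rule ev_Sigma) simp

lemma Qv_zero_iff: "Qv p = (\<lambda>_. 0) \<longleftrightarrow> p = (0,0)"
  unfolding Qv_def ev_zero_iff by (cases p) auto

lemma xt_nz: "xt tau \<noteq> (0,0)" by (cases tau) (auto simp: xt_def)

lemma Qv_in_Sp: "l \<noteq> 0 \<Longrightarrow> pt (Qv (sm l (xt tau))) \<in> Sp tau"
  unfolding Sp_eq by blast

lemma conic_not_Sp:
  assumes g: "good u v" and D: "Dt u v \<noteq> 0"
  shows "PL (spanq u v) \<inter> Qpts q \<noteq> Sp tau"
proof
  assume eq: "PL (spanq u v) \<inter> Qpts q = Sp tau"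
  define x0 where "x0 = xt tau"
  have x0nz: "x0 \<noteq> (0,0)" unfolding x0_def by (rule xt_nz)
  have mem: "\<And>l. l \<noteq> 0 \<Longrightarrow> sm l x0 \<in> spanq u v"
  proof -
    fix l :: 'a assume l: "l \<noteq> 0"
    have "pt (Qv (sm l x0)) \<in> PL (spanq u v)" using Qv_in_Sp[OF l, of tau] eq unfolding x0_def by blast
    thus "sm l x0 \<in> spanq u v" unfolding Qv_def
      by (rule ptev_in_PL[rotated 2]) (simp_all add: sm_zero_iff[OF x0nz] l)
  qed
  have "sm 1 x0 = x0" by (simp add: sm_def)
  hence "x0 \<in> spanq u v" using mem[of 1] by simp
  then obtain a b where ab: "x0 = pa (sm a u) (sm b v)" "a \<in> FQ" "b \<in> FQ" unfolding spanq_def by blast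
  from mem[OF w_ne0] obtain c d where cd: "sm w x0 = pa (sm c u) (sm d v)" "c \<in> FQ" "d \<in> FQ"
    unfolding spanq_def by blast
  obtain X1 X2 where x0: "x0 = (X1, X2)" by (cases x0)
  obtain u1 u2 where u: "u = (u1, u2)" by (cases u)
  obtain v1 v2 where v: "v = (v1, v2)" by (cases v)
  have E: "X1 = a*u1+b*v1" "X2 = a*u2+b*v2" "w*X1 = c*u1+d*v1" "w*X2 = c*u2+d*v2"
    using ab(1) cd(1) unfolding x0 u v by (simp_all add: sm_def pa_def)
  have "Dt x0 (sm w x0) = 2 * (w * X1 * X2)" unfolding x0 Dt_def sm_def by (simp only: fst_conv snd_conv) algebra
  hence "Dt x0 (sm w x0) = 0" by (simp only: two0 mult_zero_left)
  hence "Dt (pa (sm a u) (sm b v)) (pa (sm c u) (sm d v)) = 0"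
    unfolding cd(1)[symmetric] ab(1)[symmetric] .
  hence "(a * d + c * b) * Dt u v = 0" unfolding Dt_span .
  hence adcb: "a * d + c * b = 0" using D by simp
  have "(d + b*w) * X1 = (a*d + c*b) * u1 + 2 * (b*d*v1)" using E by algebra
  hence e1: "(d + b*w) * X1 = 0" using adcb by (simp only: two0 mult_zero_left mult_zero_right add_0_right add_0_left)
  have "(d + b*w) * X2 = (a*d + c*b) * u2 + 2 * (b*d*v2)" using E by algebra
  hence e2: "(d + b*w) * X2 = 0" using adcb by (simp only: two0 mult_zero_left mult_zero_right add_0_right add_0_left)
  have "(c + a*w) * X1 = (a*d + c*b) * v1 + 2 * (a*c*u1)" using E by algebra
  hence e3: "(c + a*w) * X1 = 0" using adcb by (simp only: two0 mult_zero_left mult_zero_right add_0_right add_0_left)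
  have "(c + a*w) * X2 = (a*d + c*b) * v2 + 2 * (a*c*u2)" using E by algebra
  hence e4: "(c + a*w) * X2 = 0" using adcb by (simp only: two0 mult_zero_left mult_zero_right add_0_right add_0_left)
  have Xnz: "X1 \<noteq> 0 \<or> X2 \<noteq> 0" using x0nz x0 by simp
  have "d + b*w = 0" using e1 e2 Xnz by auto
  hence "d = 0 \<and> b = 0" using indep_1_lam[OF w_nFq cd(3) ab(3)] by simp
  moreover have "c + a*w = 0" using e3 e4 Xnz by auto
  hence "c = 0 \<and> a = 0" using indep_1_lam[OF w_nFq cd(2) ab(2)] by simp
  ultimately have "X1 = 0 \<and> X2 = 0" using E by simp
  thus False using Xnz by simp
qed

lemma E_lin:
  assumes "b \<in> FQ" "c \<in> FQ"
  shows "(\<lambda>i. b * E x1 d1 z1 i + c * E x2 d2 z2 i) = E (b*x1+c*x2) (b*d1+c*d2) (b*z1+c*z2)"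
  unfolding E_def using assms by (simp add: mk6_def fun_eq_iff frob_add power_mult_distrib)

lemma Qv_lin:
  assumes bc: "b \<in> FQ" "c \<in> FQ"
  shows "Qv (sm (b + c*w) x0) = (\<lambda>i. b * Qv x0 i + c * Qv (sm w x0) i)"
proof -
  obtain X1 X2 where x0: "x0 = (X1, X2)" by (cases x0)
  define s where "s = sr (X1 * X2)"
  have ss: "s * s = X1 * X2" using sr_sq[of "X1*X2"] unfolding s_def by (simp add: power2_eq_square)
  have key: "\<And>l. sr (tr (fst (sm l x0) * snd (sm l x0))) = tr (l * s)"
  proof -
    fix l
    have "fst (sm l x0) * snd (sm l x0) = l * l * (X1 * X2)" by (simp add: x0 sm_def algebra_simps)
    also have "\<dots> = (l * s) ^ 2" unfolding ss[symmetric] by (simp add: power2_eq_square algebra_simps)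
    finally have "fst (sm l x0) * snd (sm l x0) = (l * s) ^ 2" .
    thus "sr (tr (fst (sm l x0) * snd (sm l x0))) = tr (l * s)" by (simp add: sr_tr_sq)
  qed
  have k1: "sr (tr (fst x0 * snd x0)) = tr s" using key[of 1] by (simp add: sm_def)
  have "Qv (sm (b + c*w) x0) = E ((b + c*w) * X1) (tr ((b + c*w) * s)) ((b + c*w) * X2)"
    unfolding Qv_def ev_def key by (simp add: x0 sm_def)
  also have "\<dots> = E (b*X1+c*(w*X1)) (b*tr s+c*tr (w*s)) (b*X2+c*(w*X2))"
    using bc by (simp add: algebra_simps tr_add tr_smult)
  also have "\<dots> = (\<lambda>i. b * E X1 (tr s) X2 i + c * E (w*X1) (tr (w*s)) (w*X2) i)"
    by (rule E_lin[OF bc, symmetric])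
  also have "\<dots> = (\<lambda>i. b * Qv x0 i + c * Qv (sm w x0) i)"
    unfolding Qv_def ev_def key k1 by (simp add: x0 sm_def)
  finally show ?thesis .
qed

lemma qf3_hom: "qf3 c1 c2 c3 c4 c5 c6 (k*x) (k*y) (k*z) = (k::'a)^2 * qf3 c1 c2 c3 c4 c5 c6 x y z"
  unfolding qf3_def by algebra

lemma lin3_lin: "(\<lambda>i. b * lin3 u v x a1 a2 a3 i + c * lin3 u v x e1 e2 e3 i) = lin3 u v x (b*a1+c*e1) (b*a2+c*e2) (b*a3+c*e3)"
  by (simp add: lin3_def fun_eq_iff algebra_simps)

lemma not_conic_Sp: "\<not> nondeg_conic_in q pi (Sp tau)"
proof
  assume "nondeg_conic_in q pi (Sp tau)"
  thus False unfolding nondeg_conic_in_def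
  proof (elim exE conjE)
  fix u v x c1 c2 c3 c4 c5 c6
  assume h:
    "u \<in> SigmaVecs q" "v \<in> SigmaVecs q" "x \<in> SigmaVecs q" "fq_indep q u v x" "pi = plane_span q u v x"
    "c1 \<in> FQ" "c2 \<in> FQ" "c3 \<in> FQ" "c4 \<in> FQ" "c5 \<in> FQ" "c6 \<in> FQ"
    "qf3_nonsingular q c1 c2 c3 c4 c5 c6"
    and C: "Sp tau = {pt (lin3 u v x a b c) | a b c. a \<in> FQ \<and> b \<in> FQ \<and> c \<in> FQ \<and>
               \<not> (a = 0 \<and> b = 0 \<and> c = 0) \<and> qf3 c1 c2 c3 c4 c5 c6 a b c = 0}"
  let ?Q = "qf3 c1 c2 c3 c4 c5 c6"
  define x0 where "x0 = xt tau"
  have x0nz: "x0 \<noteq> (0,0)" unfolding x0_def by (rule xt_nz)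
  define V1 where "V1 = Qv x0"
  define V2 where "V2 = Qv (sm w x0)"
  have Vlin: "\<And>b c. b \<in> FQ \<Longrightarrow> c \<in> FQ \<Longrightarrow> (\<lambda>i. b * V1 i + c * V2 i) = Qv (sm (b + c*w) x0)"
    unfolding V1_def V2_def using Qv_lin by simp
  have lnz: "b + c*w \<noteq> 0" if "b \<in> FQ" "c \<in> FQ" "\<not> (b = 0 \<and> c = 0)" for b c
  proof
    assume "b + c*w = 0"
    from indep_1_lam[OF w_nFq that(1,2) this] that(3) show False by simp
  qed
  have coef: "\<exists>e1 e2 e3. e1 \<in> FQ \<and> e2 \<in> FQ \<and> e3 \<in> FQ \<and> (\<lambda>i. b * V1 i + c * V2 i) = lin3 u v x e1 e2 e3
      \<and> ?Q e1 e2 e3 = 0" if bc: "b \<in> FQ" "c \<in> FQ" "\<not> (b = 0 \<and> c = 0)" for b c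
  proof -
    have "pt (Qv (sm (b + c*w) x0)) \<in> Sp tau" unfolding x0_def by (rule Qv_in_Sp[OF lnz[OF bc]])
    then obtain a1 a2 a3 where a: "pt (Qv (sm (b + c*w) x0)) = pt (lin3 u v x a1 a2 a3)"
      "a1 \<in> FQ" "a2 \<in> FQ" "a3 \<in> FQ" "\<not> (a1 = 0 \<and> a2 = 0 \<and> a3 = 0)" "?Q a1 a2 a3 = 0"
      unfolding C mem_Collect_eq by (elim exE conjE) (rule that, assumption+)
    from pt_eq_imp[OF a(1)] obtain k where k: "k \<noteq> 0" "Qv (sm (b + c*w) x0) = (\<lambda>i. k * lin3 u v x a1 a2 a3 i)"
      by blast
    have lS: "lin3 u v x a1 a2 a3 \<in> SigmaVecs q" by (rule lin3_Sigma[OF h(1-3) a(2-4)])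
    have lnz': "lin3 u v x a1 a2 a3 \<noteq> (\<lambda>_. 0)" using h(4) a(2-5) unfolding fq_indep_def by blast
    have kF: "k \<in> FQ" by (rule sigma_scalar[OF lS lnz']) (simp only: k(2)[symmetric] Qv_Sigma)
    have "(\<lambda>i. b * V1 i + c * V2 i) = lin3 u v x (k*a1) (k*a2) (k*a3)"
      unfolding Vlin[OF bc(1,2)] k(2) by (simp add: lin3_def fun_eq_iff algebra_simps)
    moreover have "?Q (k*a1) (k*a2) (k*a3) = 0" by (simp add: qf3_hom a(6))
    ultimately show ?thesis using kF a(2-4) by (intro exI[of _ "k*a1"] exI[of _ "k*a2"] exI[of _ "k*a3"]) simp
  qed
  have n10: "\<not> ((1::'a) = 0 \<and> (0::'a) = 0)" "\<not> ((0::'a) = 0 \<and> (1::'a) = 0)" by simp_all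
  obtain p1 p2 p3 where P: "p1 \<in> FQ" "p2 \<in> FQ" "p3 \<in> FQ" "(\<lambda>i. 1 * V1 i + 0 * V2 i) = lin3 u v x p1 p2 p3"
    using coef[OF Fq_1 Fq_0 n10(1)] by (elim exE conjE) (rule that, assumption+)
  obtain r1 r2 r3 where R: "r1 \<in> FQ" "r2 \<in> FQ" "r3 \<in> FQ" "(\<lambda>i. 0 * V1 i + 1 * V2 i) = lin3 u v x r1 r2 r3"
    using coef[OF Fq_0 Fq_1 n10(2)] by (elim exE conjE) (rule that, assumption+)
  have V1e: "V1 = lin3 u v x p1 p2 p3" using P(4) by simp
  have V2e: "V2 = lin3 u v x r1 r2 r3" using R(4) by simp
  have comb: "(\<lambda>i. b * V1 i + c * V2 i) = lin3 u v x (b*p1+c*r1) (b*p2+c*r2) (b*p3+c*r3)" for b c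
    unfolding V1e V2e by (rule lin3_lin)
  have z: "?Q (b*p1+c*r1) (b*p2+c*r2) (b*p3+c*r3) = 0" if bc: "b \<in> FQ" "c \<in> FQ" for b c
  proof (cases "b = 0 \<and> c = 0")
    case True thus ?thesis by (simp add: qf3_def)
  next
    case False
    from coef[OF bc False] obtain e1 e2 e3 where e: "e1 \<in> FQ" "e2 \<in> FQ" "e3 \<in> FQ"
      "(\<lambda>i. b * V1 i + c * V2 i) = lin3 u v x e1 e2 e3" "?Q e1 e2 e3 = 0" by (elim exE conjE) (rule that, assumption+)
    have "lin3 u v x (b*p1+c*r1) (b*p2+c*r2) (b*p3+c*r3) = lin3 u v x e1 e2 e3" using e(4) comb by simp
    moreover have "b*p1+c*r1 \<in> FQ" "b*p2+c*r2 \<in> FQ" "b*p3+c*r3 \<in> FQ" using bc P R by simp_all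
    ultimately have "b*p1+c*r1 = e1 \<and> b*p2+c*r2 = e2 \<and> b*p3+c*r3 = e3"
      using lin3_inj[OF h(4) _ _ _ e(1-3)] by blast
    thus ?thesis using e(5) by simp
  qed
  have i: "ind3 p1 p2 p3 r1 r2 r3"
    unfolding ind3_def
  proof (intro allI impI)
    fix b c assume bc: "b \<in> FQ \<and> c \<in> FQ \<and> b*p1+c*r1 = 0 \<and> b*p2+c*r2 = 0 \<and> b*p3+c*r3 = 0"
    hence "(\<lambda>i. b * V1 i + c * V2 i) = lin3 u v x 0 0 0" using comb[of b c] by simp
    also have "\<dots> = (\<lambda>_. 0)" by (simp add: lin3_def fun_eq_iff)
    finally have "Qv (sm (b + c*w) x0) = (\<lambda>_. 0)" using Vlin bc by simp
    hence "sm (b + c*w) x0 = (0,0)" by (simp add: Qv_zero_iff)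
    hence "b + c*w = 0" using sm_zero_iff[OF x0nz] by simp
    moreover have "b \<in> FQ" "c \<in> FQ" using bc by simp_all
    ultimately show "b = 0 \<and> c = 0" using indep_1_lam[OF w_nFq] by blast
  qed
  show False by (rule line_contra[OF h(6-12) P(1-3) R(1-3) i z])
  qed
qed

end


context setting begin

lemma Qf_span:
  assumes y: "y \<in> FQ" and z: "z \<in> FQ"
  shows "tr (fst (pa (sm y u) (sm z v)) * snd (pa (sm y u) (sm z v)))
       = tr (fst u * snd u) * y^2 + tr (fst v * snd v) * z^2 + tr (Dt u v) * y * z"
proof -
  have "fst (pa (sm y u) (sm z v)) * snd (pa (sm y u) (sm z v))
      = y^2 * (fst u * snd u) + z^2 * (fst v * snd v) + (y * z) * Dt u v"
    unfolding pa_def sm_def Dt_def by (simp only: fst_conv snd_conv) algebra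
  hence "tr (fst (pa (sm y u) (sm z v)) * snd (pa (sm y u) (sm z v)))
      = y^2 * tr (fst u * snd u) + z^2 * tr (fst v * snd v) + (y * z) * tr (Dt u v)"
    using y z by (simp add: tr_add tr_smult)
  thus ?thesis by (simp add: algebra_simps)
qed

lemma trD_nz:
  assumes g: "good u v" and D: "Dt u v \<noteq> 0"
  shows "tr (Dt u v) \<noteq> 0"
proof
  assume "tr (Dt u v) = 0"
  hence DF: "Dt u v \<in> FQ" by (simp add: tr_zero_iff)
  have "tr (w * Dt u v) = Dt u v * tr w" using tr_smult[OF DF, of w] by (simp add: mult.commute)
  also have "tr w = 1" using w_tr by (simp add: tr_def)
  finally have "tr (w * Dt u v) = Dt u v" by simp
  thus False using g D by (simp add: good_def)
qed

lemma conic_O2: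
  assumes g: "good u v" and D: "Dt u v \<noteq> 0"
  shows "nondeg_conic_in q (PL (spanq u v)) (PL (spanq u v) \<inter> Qpts q)"
proof -
  have ind: "indep u v" using g by (simp add: good_def)
  define A where "A = tr (fst u * snd u)"
  define C where "C = tr (fst v * snd v)"
  define T where "T = tr (Dt u v)"
  have Tnz: "T \<noteq> 0" unfolding T_def by (rule trD_nz[OF g D])
  have qfe: "qf3 1 A C 0 0 T x y z = x^2 + tr (fst (pa (sm y u) (sm z v)) * snd (pa (sm y u) (sm z v)))"
    if "y \<in> FQ" "z \<in> FQ" for x y z
    unfolding Qf_span[OF that] qf3_def A_def C_def T_def by (simp add: algebra_simps)
  have ns: "qf3_nonsingular q 1 A C 0 0 T"
    unfolding qf3_nonsingular_def
  proof (intro allI impI)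
    fix x y z assume H: "x \<in> FQ \<and> y \<in> FQ \<and> z \<in> FQ \<and> \<not> (x = 0 \<and> y = 0 \<and> z = 0) \<and> qf3 1 A C 0 0 T x y z = 0"
    show "\<exists>x' y' z'. x' \<in> FQ \<and> y' \<in> FQ \<and> z' \<in> FQ \<and>
           qf3 1 A C 0 0 T (x + x') (y + y') (z + z') - qf3 1 A C 0 0 T x y z - qf3 1 A C 0 0 T x' y' z' \<noteq> 0"
    proof (cases "y = 0")
      case False
      have "qf3 1 A C 0 0 T (x + 0) (y + 0) (z + 1) - qf3 1 A C 0 0 T x y z - qf3 1 A C 0 0 T 0 0 1 = T * y"
        unfolding polar_char2 by simp
      thus ?thesis using False Tnz by (intro exI[of _ 0] exI[of _ 0] exI[of _ 1]) simp
    next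
      case y0: True
      show ?thesis
      proof (cases "z = 0")
        case False
        have "qf3 1 A C 0 0 T (x + 0) (y + 1) (z + 0) - qf3 1 A C 0 0 T x y z - qf3 1 A C 0 0 T 0 1 0 = T * z"
          unfolding polar_char2 by simp
        thus ?thesis using False Tnz by (intro exI[of _ 0] exI[of _ 1] exI[of _ 0]) simp
      next
        case True
        have "qf3 1 A C 0 0 T x y z = x^2" using y0 True by (simp add: qf3_def)
        hence "x = 0" using H by simp
        thus ?thesis using H y0 True by simp
      qed
    qed
  qed
  have seteq: "PL (spanq u v) \<inter> Qpts q = {pt (lin3 (mk6 0 0 1 0 0 0) (ev 0 u) (ev 0 v) x y z) | x y z.
      x \<in> FQ \<and> y \<in> FQ \<and> z \<in> FQ \<and> \<not> (x = 0 \<and> y = 0 \<and> z = 0) \<and> qf3 1 A C 0 0 T x y z = 0}"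
    unfolding PLQ0
  proof (intro set_eqI iffI)
    fix P assume "P \<in> {pt (ev x p) |x p. x \<in> FQ \<and> p \<in> spanq u v \<and> \<not> (x = 0 \<and> p = (0, 0)) \<and> x\<^sup>2 = tr (fst p * snd p)}"
    then obtain x p where h: "P = pt (ev x p)" "x \<in> FQ" "p \<in> spanq u v" "\<not> (x = 0 \<and> p = (0, 0))"
      "x\<^sup>2 = tr (fst p * snd p)" by blast
    from h(3) obtain y z where p: "p = pa (sm y u) (sm z v)" "y \<in> FQ" "z \<in> FQ" unfolding spanq_def by blast
    have "P = pt (lin3 (mk6 0 0 1 0 0 0) (ev 0 u) (ev 0 v) x y z)" using h(1) p lin3_ev[OF h(2) p(2,3)] by simp
    moreover have "\<not> (x = 0 \<and> y = 0 \<and> z = 0)" using h(4) p by (auto simp: sm_def pa_def)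
    moreover have "qf3 1 A C 0 0 T x y z = 0" unfolding qfe[OF p(2,3)] p(1)[symmetric] h(5) by simp
    ultimately show "P \<in> {pt (lin3 (mk6 0 0 1 0 0 0) (ev 0 u) (ev 0 v) x y z) | x y z.
      x \<in> FQ \<and> y \<in> FQ \<and> z \<in> FQ \<and> \<not> (x = 0 \<and> y = 0 \<and> z = 0) \<and> qf3 1 A C 0 0 T x y z = 0}"
      using h(2) p(2,3) by blast
  next
    fix P assume "P \<in> {pt (lin3 (mk6 0 0 1 0 0 0) (ev 0 u) (ev 0 v) x y z) | x y z.
      x \<in> FQ \<and> y \<in> FQ \<and> z \<in> FQ \<and> \<not> (x = 0 \<and> y = 0 \<and> z = 0) \<and> qf3 1 A C 0 0 T x y z = 0}"
    then obtain x y z where h: "P = pt (lin3 (mk6 0 0 1 0 0 0) (ev 0 u) (ev 0 v) x y z)" "x \<in> FQ" "y \<in> FQ" "z \<in> FQ"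
      "\<not> (x = 0 \<and> y = 0 \<and> z = 0)" "qf3 1 A C 0 0 T x y z = 0" by blast
    define p where "p = pa (sm y u) (sm z v)"
    have "P = pt (ev x p)" using h(1) lin3_ev[OF h(2-4)] p_def by simp
    moreover have "p \<in> spanq u v" unfolding p_def by (rule spanq_gen[OF h(3,4)])
    moreover have "\<not> (x = 0 \<and> p = (0, 0))" using h(5) indep_nz[OF ind h(3,4)] p_def by simp
    moreover have "x\<^sup>2 = tr (fst p * snd p)" using h(6) unfolding qfe[OF h(3,4)] p_def[symmetric] add_eq0 .
    ultimately show "P \<in> {pt (ev x p) |x p. x \<in> FQ \<and> p \<in> spanq u v \<and> \<not> (x = 0 \<and> p = (0, 0)) \<and> x\<^sup>2 = tr (fst p * snd p)}"
      using h(2) by blast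
  qed
  show ?thesis
    unfolding nondeg_conic_in_def
    apply (rule exI[of _ "mk6 0 0 1 0 0 0"], rule exI[of _ "ev 0 u"], rule exI[of _ "ev 0 v"])
    apply (rule exI[of _ 1], rule exI[of _ A], rule exI[of _ C], rule exI[of _ 0], rule exI[of _ 0], rule exI[of _ T])
    using Nv_Sigma ev_Sigma[OF Fq_0] fqi_PL[OF ind] plane_PL[OF ind] ns seteq
    by (simp add: A_def C_def T_def)
qed

definition O1' :: "(nat \<Rightarrow> 'a) set set set" where "O1' = {PL (spanq u v) | u v. good u v \<and> Dt u v = 0}"
definition O2' :: "(nat \<Rightarrow> 'a) set set set" where "O2' = {PL (spanq u v) | u v. good u v \<and> Dt u v \<noteq> 0}"

lemma O1_eq: "{pi \<in> WPlanesN q w. \<exists>L\<in>Spread q. pi \<inter> Qpts q = L} = O1'"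
proof (intro set_eqI iffI)
  fix pi assume "pi \<in> {pi \<in> WPlanesN q w. \<exists>L\<in>Spread q. pi \<inter> Qpts q = L}"
  hence P: "pi \<in> WPlanesN q w" and L: "\<exists>L\<in>Spread q. pi \<inter> Qpts q = L" by auto
  from P_PL[OF P] obtain u v where uv: "good u v" "pi = PL (spanq u v)" by blast
  from L obtain tau where t: "pi \<inter> Qpts q = Sp tau" unfolding Spread_eq by blast
  have "Dt u v = 0"
  proof (rule ccontr)
    assume "Dt u v \<noteq> 0"
    from conic_not_Sp[OF uv(1) this, of tau] t uv(2) show False by simp
  qed
  thus "pi \<in> O1'" unfolding O1'_def using uv by blast
next
  fix pi assume "pi \<in> O1'"
  then obtain u v where uv: "good u v" "Dt u v = 0" "pi = PL (spanq u v)" unfolding O1'_def by blast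
  have "pi \<in> WPlanesN q w" using PL_in_P[OF uv(1)] uv(3) by simp
  moreover obtain tau where "PL (spanq u v) \<inter> Qpts q = Sp tau" using O1_meet[OF uv(1,2)] by blast
  hence "\<exists>L\<in>Spread q. pi \<inter> Qpts q = L" unfolding Spread_eq uv(3) by blast
  ultimately show "pi \<in> {pi \<in> WPlanesN q w. \<exists>L\<in>Spread q. pi \<inter> Qpts q = L}" by blast
qed

lemma O2_eq: "{pi \<in> WPlanesN q w. nondeg_conic_in q pi (pi \<inter> Qpts q)} = O2'"
proof (intro set_eqI iffI)
  fix pi assume "pi \<in> {pi \<in> WPlanesN q w. nondeg_conic_in q pi (pi \<inter> Qpts q)}"
  hence P: "pi \<in> WPlanesN q w" and C: "nondeg_conic_in q pi (pi \<inter> Qpts q)" by auto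
  from P_PL[OF P] obtain u v where uv: "good u v" "pi = PL (spanq u v)" by blast
  have "Dt u v \<noteq> 0"
  proof
    assume "Dt u v = 0"
    from O1_meet[OF uv(1) this] obtain tau where "PL (spanq u v) \<inter> Qpts q = Sp tau" by blast
    thus False using not_conic_Sp[of pi tau] C uv(2) by simp
  qed
  thus "pi \<in> O2'" unfolding O2'_def using uv by blast
next
  fix pi assume "pi \<in> O2'"
  then obtain u v where uv: "good u v" "Dt u v \<noteq> 0" "pi = PL (spanq u v)" unfolding O2'_def by blast
  have "pi \<in> WPlanesN q w" using PL_in_P[OF uv(1)] uv(3) by simp
  moreover have "nondeg_conic_in q pi (pi \<inter> Qpts q)" using conic_O2[OF uv(1,2)] uv(3) by simp
  ultimately show "pi \<in> {pi \<in> WPlanesN q w. nondeg_conic_in q pi (pi \<inter> Qpts q)}" by blast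
qed

end


lemma sum16: "(\<Sum>j = 1..6. (f::nat \<Rightarrow> 'b) j) = f 1 + f 2 + f 3 + f 4 + f 5 + (f 6 :: 'b::comm_monoid_add)"
proof -
  have "{1..6::nat} = {1,2,3,4,5,6}" by auto
  thus ?thesis by (simp add: add.assoc)
qed

lemma sum16': "(\<Sum>j = Suc 0..6. (f::nat \<Rightarrow> 'b) j) = f 1 + f 2 + f 3 + f 4 + f 5 + (f 6 :: 'b::comm_monoid_add)"
  using sum16[of f] by simp

context setting begin

lemma mat_app_E:
  "mat_app (Mmat q w a b c d) (E x dd z) = E (a^2*x + c^2*z) (dd + tr (a*b*x) + tr (c*d*z)) (b^2*x + d^2*z)"
proof (rule ext)
  fix i :: nat
  have pw: "\<And>y::'a. (y ^ 2) ^ q = y ^ (2 * q)" by (simp add: power_mult)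
  consider "i = 1" | "i = 2" | "i = 3" | "i = 4" | "i = 5" | "i = 6" | "i < 1 \<or> i > 6" by linarith
  thus "mat_app (Mmat q w a b c d) (E x dd z) i = E (a^2*x + c^2*z) (dd + tr (a*b*x) + tr (c*d*z)) (b^2*x + d^2*z) i"
  proof cases
    case 1 thus ?thesis by (simp add: mat_app_def sum16 sum16' Mmat_def E_def)
  next
    case 2 thus ?thesis by (simp add: mat_app_def sum16 sum16' Mmat_def E_def frob_add power_mult_distrib pw)
  next
    case 3 thus ?thesis by (simp add: mat_app_def sum16 sum16' Mmat_def E_def tr_def power_mult_distrib algebra_simps)
  next
    case 4 thus ?thesis by (simp add: mat_app_def sum16 sum16' Mmat_def E_def frob_add power_mult_distrib pw)
  next
    case 5 thus ?thesis by (simp add: mat_app_def sum16 sum16' Mmat_def E_def)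
  next
    case 6 thus ?thesis by (simp add: mat_app_def sum16 sum16' Mmat_def E_def)
  next
    case 7 thus ?thesis by (auto simp: mat_app_def E_def mk6_def)
  qed
qed

definition smat :: "'a \<Rightarrow> 'a \<Rightarrow> 'a \<Rightarrow> 'a \<Rightarrow> 'a \<times> 'a \<Rightarrow> 'a \<times> 'a" where
  "smat s11 s12 s21 s22 p = (s11 * fst p + s12 * snd p, s21 * fst p + s22 * snd p)"

lemma mat_app_ev:
  "mat_app (Mmat q w a b c d) (ev x p) = ev (x + tr (a*b*fst p) + tr (c*d*snd p)) (smat (a^2) (c^2) (b^2) (d^2) p)"
  unfolding ev_def mat_app_E smat_def by simp

lemma mat_app_smul: "mat_app M (\<lambda>i. k * v i) = (\<lambda>i. k * mat_app M v i)"
  by (simp add: mat_app_def fun_eq_iff sum_distrib_left algebra_simps)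

lemma act_pt_pt: "act_pt M (pt v) = pt (mat_app M v)"
  unfolding act_pt_def pt_def
proof (intro set_eqI iffI)
  fix y assume "y \<in> mat_app M ` {(\<lambda>i. c * v i) |c. c \<noteq> 0}"
  then obtain c where c: "c \<noteq> 0" "y = mat_app M (\<lambda>i. c * v i)" by blast
  hence "y = (\<lambda>i. c * mat_app M v i)" by (simp add: mat_app_smul)
  thus "y \<in> {(\<lambda>i. c * mat_app M v i) |c. c \<noteq> 0}" using c(1) by blast
next
  fix y assume "y \<in> {(\<lambda>i. c * mat_app M v i) |c. c \<noteq> 0}"
  then obtain c where c: "c \<noteq> 0" "y = (\<lambda>i. c * mat_app M v i)" by blast
  hence "y = mat_app M (\<lambda>i. c * v i)" by (simp add: mat_app_smul)
  thus "y \<in> mat_app M ` {(\<lambda>i. c * v i) |c. c \<noteq> 0}" using c(1) by blast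
qed

lemma smat_lin: "smat s11 s12 s21 s22 (pa (sm y u) (sm z v)) = pa (sm y (smat s11 s12 s21 s22 u)) (sm z (smat s11 s12 s21 s22 v))"
  by (simp add: smat_def pa_def sm_def algebra_simps)

lemma smat_inv:
  assumes det: "s11 * s22 + s12 * s21 = 1"
  shows "smat s22 s12 s21 s11 (smat s11 s12 s21 s22 p) = p"
proof -
  obtain p1 p2 where p: "p = (p1, p2)" by (cases p)
  have "s22 * (s11 * p1 + s12 * p2) + s12 * (s21 * p1 + s22 * p2) = (s11 * s22 + s12 * s21) * p1 + 2 * (s12*s22*p2)"
    by algebra
  moreover have "s21 * (s11 * p1 + s12 * p2) + s11 * (s21 * p1 + s22 * p2) = (s11 * s22 + s12 * s21) * p2 + 2 * (s11*s21*p1)"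
    by algebra
  ultimately show ?thesis unfolding p smat_def using det by (simp add: two0)
qed

lemma smat_zero: "smat s11 s12 s21 s22 (0,0) = (0,0)" by (simp add: smat_def)

lemma Dt_smat: "Dt (smat s11 s12 s21 s22 u) (smat s11 s12 s21 s22 v) = (s11 * s22 + s12 * s21) * Dt u v"
proof -
  obtain u1 u2 where u: "u = (u1, u2)" by (cases u)
  obtain v1 v2 where v: "v = (v1, v2)" by (cases v)
  have "Dt (smat s11 s12 s21 s22 u) (smat s11 s12 s21 s22 v) = (s11 * s22 + s12 * s21) * Dt u v
        + 2 * (s11*s21*u1*v1 + s12*s22*u2*v2)"
    unfolding u v smat_def Dt_def by (simp only: fst_conv snd_conv) algebra
  thus ?thesis by (simp add: two0)
qed

lemma det_sq: "a * d + b * c = 1 \<Longrightarrow> a^2 * d^2 + c^2 * b^2 = (1::'a)"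
proof -
  assume h: "a * d + b * c = 1"
  have "a^2 * d^2 + c^2 * b^2 = (a * d + b * c)^2" by (simp add: sq_add power_mult_distrib algebra_simps)
  thus ?thesis using h by simp
qed

lemma act_PL:
  assumes det: "a * d + b * c = 1"
  shows "act_pt (Mmat q w a b c d) ` PL (spanq u v) =
    PL (spanq (smat (a^2) (c^2) (b^2) (d^2) u) (smat (a^2) (c^2) (b^2) (d^2) v))"
proof -
  let ?M = "Mmat q w a b c d"
  let ?S = "smat (a^2) (c^2) (b^2) (d^2)"
  have dS: "a^2 * d^2 + c^2 * b^2 = 1" by (rule det_sq[OF det])
  have Sinj: "\<And>p. ?S p = (0,0) \<Longrightarrow> p = (0,0)"
  proof -
    fix p assume "?S p = (0,0)"
    hence "smat (d^2) (c^2) (b^2) (a^2) (?S p) = (0,0)" by (simp add: smat_zero)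
    thus "p = (0,0)" using smat_inv[OF dS] by simp
  qed
  show ?thesis
  proof (intro set_eqI iffI)
    fix P' assume "P' \<in> act_pt ?M ` PL (spanq u v)"
    then obtain P where P: "P \<in> PL (spanq u v)" "P' = act_pt ?M P" by blast
    then obtain x p where h: "P = pt (ev x p)" "x \<in> FQ" "p \<in> spanq u v" "\<not> (x = 0 \<and> p = (0,0))"
      unfolding PL_def by blast
    from h(3) obtain y z where p: "p = pa (sm y u) (sm z v)" "y \<in> FQ" "z \<in> FQ" unfolding spanq_def by blast
    define x' where "x' = x + tr (a*b*fst p) + tr (c*d*snd p)"
    have x'F: "x' \<in> FQ" using h(2) by (simp add: x'_def)
    have P'e: "P' = pt (ev x' (?S p))" using P(2) h(1) by (simp add: act_pt_pt mat_app_ev x'_def)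
    have Sp: "?S p \<in> spanq (?S u) (?S v)" unfolding p(1) smat_lin by (rule spanq_gen[OF p(2,3)])
    have nz: "\<not> (x' = 0 \<and> ?S p = (0,0))"
    proof
      assume a: "x' = 0 \<and> ?S p = (0,0)"
      hence "p = (0,0)" using Sinj by blast
      hence "x' = x" by (simp add: x'_def)
      thus False using a h(4) \<open>p = (0,0)\<close> by simp
    qed
    show "P' \<in> PL (spanq (?S u) (?S v))" unfolding PL_def P'e using x'F Sp nz by blast
  next
    fix P' assume "P' \<in> PL (spanq (?S u) (?S v))"
    then obtain x' p' where h: "P' = pt (ev x' p')" "x' \<in> FQ" "p' \<in> spanq (?S u) (?S v)" "\<not> (x' = 0 \<and> p' = (0,0))"
      unfolding PL_def by blast
    from h(3) obtain y z where p': "p' = pa (sm y (?S u)) (sm z (?S v))" "y \<in> FQ" "z \<in> FQ" unfolding spanq_def by blast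
    define p where "p = pa (sm y u) (sm z v)"
    have Spe: "?S p = p'" unfolding p_def p'(1) smat_lin ..
    define x where "x = x' + tr (a*b*fst p) + tr (c*d*snd p)"
    have xF: "x \<in> FQ" using h(2) by (simp add: x_def)
    have xx: "x + tr (a*b*fst p) + tr (c*d*snd p) = x'"
    proof -
      have "x + tr (a*b*fst p) + tr (c*d*snd p) = x' + (tr (a*b*fst p) + tr (a*b*fst p)) + (tr (c*d*snd p) + tr (c*d*snd p))"
        unfolding x_def by algebra
      thus ?thesis by (simp only: add_self add_0_right)
    qed
    have pS: "p \<in> spanq u v" unfolding p_def by (rule spanq_gen[OF p'(2,3)])
    have nz: "\<not> (x = 0 \<and> p = (0,0))"
    proof
      assume a: "x = 0 \<and> p = (0,0)"
      hence "p' = (0,0)" using Spe smat_zero by metis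
      moreover have "x' = 0" using xx a by simp
      ultimately show False using h(4) by simp
    qed
    have "pt (ev x p) \<in> PL (spanq u v)" unfolding PL_def using xF pS nz by blast
    moreover have "act_pt ?M (pt (ev x p)) = P'" unfolding act_pt_pt mat_app_ev xx Spe h(1) ..
    ultimately show "P' \<in> act_pt ?M ` PL (spanq u v)" by (metis image_eqI)
  qed
qed

lemma good_smat:
  assumes g: "good u v" and det: "s11 * s22 + s12 * s21 = 1"
  shows "good (smat s11 s12 s21 s22 u) (smat s11 s12 s21 s22 v) \<and> Dt (smat s11 s12 s21 s22 u) (smat s11 s12 s21 s22 v) = Dt u v"
proof -
  let ?S = "smat s11 s12 s21 s22"
  have D: "Dt (?S u) (?S v) = Dt u v" using Dt_smat det by simp
  have ind: "indep u v" using g by (simp add: good_def)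
  have "indep (?S u) (?S v)"
    unfolding indep_def
  proof (intro allI impI)
    fix y z assume h: "y \<in> FQ \<and> z \<in> FQ \<and> pa (sm y (?S u)) (sm z (?S v)) = (0,0)"
    hence "?S (pa (sm y u) (sm z v)) = (0,0)" by (simp add: smat_lin)
    hence "smat s22 s12 s21 s11 (?S (pa (sm y u) (sm z v))) = (0,0)" by (simp add: smat_zero)
    hence "pa (sm y u) (sm z v) = (0,0)" using smat_inv[OF det] by simp
    thus "y = 0 \<and> z = 0" using ind h unfolding indep_def by blast
  qed
  thus ?thesis using g D unfolding good_def by simp
qed

end


context setting begin

lemma trans_pairs:
  assumes D: "Dt u v \<noteq> 0" "Dt u' v' = Dt u v"
  shows "\<exists>a b c d. a*d + b*c = 1 \<and> smat (a^2) (c^2) (b^2) (d^2) u = u' \<and> smat (a^2) (c^2) (b^2) (d^2) v = v'"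
proof -
  obtain u1 u2 where u: "u = (u1, u2)" by (cases u)
  obtain v1 v2 where v: "v = (v1, v2)" by (cases v)
  obtain x1 x2 where u': "u' = (x1, x2)" by (cases u')
  obtain y1 y2 where v': "v' = (y1, y2)" by (cases v')
  define DD where "DD = u1*v2 + v1*u2"
  have DDnz: "DD \<noteq> 0" using D(1) by (simp add: DD_def Dt_def u v)
  have DD': "DD = x1*y2 + y1*x2" using D(2) by (simp add: DD_def Dt_def u v u' v')
  define ni where "ni = inverse DD"
  have nni: "DD * ni = 1" using DDnz by (simp add: ni_def)
  define s11 where "s11 = (x1*v2 + y1*u2) * ni"
  define s12 where "s12 = (x1*v1 + y1*u1) * ni"
  define s21 where "s21 = (x2*v2 + y2*u2) * ni"
  define s22 where "s22 = (x2*v1 + y2*u1) * ni"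
  have "s11*u1 + s12*u2 = x1 + 2*(ni*y1*u1*u2)" unfolding s11_def s12_def using nni DD_def by algebra
  hence e1: "s11*u1 + s12*u2 = x1" by (simp add: two0)
  have "s21*u1 + s22*u2 = x2 + 2*(ni*y2*u1*u2)" unfolding s21_def s22_def using nni DD_def by algebra
  hence e2: "s21*u1 + s22*u2 = x2" by (simp add: two0)
  have "s11*v1 + s12*v2 = y1 + 2*(ni*x1*v1*v2)" unfolding s11_def s12_def using nni DD_def by algebra
  hence e3: "s11*v1 + s12*v2 = y1" by (simp add: two0)
  have "s21*v1 + s22*v2 = y2 + 2*(ni*x2*v1*v2)" unfolding s21_def s22_def using nni DD_def by algebra
  hence e4: "s21*v1 + s22*v2 = y2" by (simp add: two0)
  have "s11*s22 + s12*s21 = 1 + 2*(ni*ni*(x1*x2*v1*v2 + y1*y2*u1*u2))"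
    unfolding s11_def s12_def s21_def s22_def using nni DD_def DD' by algebra
  hence det: "s11*s22 + s12*s21 = 1" by (simp add: two0)
  define a where "a = sr s11"
  define c where "c = sr s12"
  define b where "b = sr s21"
  define d where "d = sr s22"
  have sq: "a^2 = s11" "c^2 = s12" "b^2 = s21" "d^2 = s22" by (simp_all add: a_def b_def c_def d_def)
  have "a*d + b*c = sr (s11*s22 + s12*s21)" by (simp add: a_def b_def c_def d_def sr_add sr_mult mult.commute)
  hence "a*d + b*c = 1" using det by simp
  moreover have "smat (a^2) (c^2) (b^2) (d^2) u = u'" unfolding sq smat_def u u' using e1 e2 by simp
  moreover have "smat (a^2) (c^2) (b^2) (d^2) v = v'" unfolding sq smat_def v v' using e3 e4 by simp
  ultimately show ?thesis by blast
qed

lemma ext_pair: assumes "u \<noteq> (0,0)" shows "\<exists>v. Dt u v = 1"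
proof -
  obtain u1 u2 where u: "u = (u1, u2)" by (cases u)
  show ?thesis
  proof (cases "u1 = 0")
    case True
    hence "u2 \<noteq> 0" using assms u by simp
    hence "Dt u (inverse u2, 0) = 1" using True u by (simp add: Dt_def)
    thus ?thesis by blast
  next
    case False
    hence "Dt u (0, inverse u1) = 1" using u by (simp add: Dt_def)
    thus ?thesis by blast
  qed
qed

lemma Dt_sm: "Dt u (sm k v) = k * Dt u v"
  by (simp add: Dt_def sm_def algebra_simps)

lemma spanq_scale:
  assumes k: "k \<in> FQ" "k \<noteq> 0"
  shows "spanq u (sm k v) = spanq u v"
proof (intro set_eqI iffI)
  fix p assume "p \<in> spanq u (sm k v)"
  then obtain a b where p: "p = pa (sm a u) (sm b (sm k v))" "a \<in> FQ" "b \<in> FQ" unfolding spanq_def by blast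
  hence "p = pa (sm a u) (sm (b * k) v)" by (simp add: sm_sm)
  thus "p \<in> spanq u v" using spanq_gen[of a "b*k"] p k by simp
next
  fix p assume "p \<in> spanq u v"
  then obtain a b where p: "p = pa (sm a u) (sm b v)" "a \<in> FQ" "b \<in> FQ" unfolding spanq_def by blast
  hence "p = pa (sm a u) (sm (b / k) (sm k v))" using k by (simp add: sm_sm)
  thus "p \<in> spanq u (sm k v)" using spanq_gen[of a "b/k"] p k by simp
qed

lemma Gorbit_PL: "Gorbit q w (PL (spanq u v)) =
  {PL (spanq (smat (a^2) (c^2) (b^2) (d^2) u) (smat (a^2) (c^2) (b^2) (d^2) v)) | a b c d. a*d + b*c = 1}"
proof (intro set_eqI iffI)
  fix X assume "X \<in> Gorbit q w (PL (spanq u v))"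
  then obtain a b c d where "X = act_pt (Mmat q w a b c d) ` PL (spanq u v)" "a*d+b*c = 1"
    unfolding Gorbit_def Gmats_def by blast
  thus "X \<in> {PL (spanq (smat (a^2) (c^2) (b^2) (d^2) u) (smat (a^2) (c^2) (b^2) (d^2) v)) | a b c d. a*d + b*c = 1}"
    using act_PL by blast
next
  fix X assume "X \<in> {PL (spanq (smat (a^2) (c^2) (b^2) (d^2) u) (smat (a^2) (c^2) (b^2) (d^2) v)) | a b c d. a*d + b*c = 1}"
  then obtain a b c d where h: "X = PL (spanq (smat (a^2) (c^2) (b^2) (d^2) u) (smat (a^2) (c^2) (b^2) (d^2) v))" "a*d+b*c = 1"
    by blast
  hence "X = act_pt (Mmat q w a b c d) ` PL (spanq u v)" using act_PL by simp
  thus "X \<in> Gorbit q w (PL (spanq u v))" unfolding Gorbit_def Gmats_def using h(2) by blast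
qed

lemma orbit_sub:
  assumes g: "good u v" and X: "X \<in> Gorbit q w (PL (spanq u v))"
  shows "\<exists>u' v'. good u' v' \<and> Dt u' v' = Dt u v \<and> X = PL (spanq u' v')"
proof -
  from X obtain a b c d where h: "X = PL (spanq (smat (a^2) (c^2) (b^2) (d^2) u) (smat (a^2) (c^2) (b^2) (d^2) v))" "a*d+b*c = 1"
    unfolding Gorbit_PL by blast
  have "a^2 * d^2 + c^2 * b^2 = 1" by (rule det_sq[OF h(2)])
  from good_smat[OF g this] h(1) show ?thesis by blast
qed

lemma orbit_O1:
  assumes g: "good u v" and D: "Dt u v = 0"
  shows "Gorbit q w (PL (spanq u v)) = O1'"
proof (intro set_eqI iffI)
  fix X assume "X \<in> Gorbit q w (PL (spanq u v))"
  from orbit_sub[OF g this] obtain u' v' where "good u' v'" "Dt u' v' = Dt u v" "X = PL (spanq u' v')" by blast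
  moreover have "Dt u' v' = 0" using D \<open>Dt u' v' = Dt u v\<close> by simp
  ultimately show "X \<in> O1'" unfolding O1'_def by blast
next
  fix X assume "X \<in> O1'"
  then obtain u' v' where h: "good u' v'" "Dt u' v' = 0" "X = PL (spanq u' v')" unfolding O1'_def by blast
  have ind: "indep u v" "indep u' v'" using g h(1) by (simp_all add: good_def)
  obtain e where e: "Dt u e = 1" using ext_pair[OF indep_left_nz[OF ind(1)]] by blast
  obtain e' where e': "Dt u' e' = 1" using ext_pair[OF indep_left_nz[OF ind(2)]] by blast
  obtain a b c d where abcd: "a*d + b*c = 1" "smat (a^2) (c^2) (b^2) (d^2) u = u'" "smat (a^2) (c^2) (b^2) (d^2) e = e'"
    using trans_pairs[of u e u' e'] e e' by auto
  let ?S = "smat (a^2) (c^2) (b^2) (d^2)"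
  have "a^2 * d^2 + c^2 * b^2 = 1" by (rule det_sq[OF abcd(1)])
  from good_smat[OF g this] D have g2: "good (?S u) (?S v)" "Dt (?S u) (?S v) = 0" by auto
  have "spanq (?S u) (?S v) = Fline (?S u)" using span_Fline[OF _ g2(2)] g2(1) by (simp add: good_def)
  also have "\<dots> = Fline u'" using abcd(2) by simp
  also have "\<dots> = spanq u' v'" using span_Fline[OF ind(2) h(2)] by simp
  finally have "X = PL (spanq (?S u) (?S v))" using h(3) by simp
  thus "X \<in> Gorbit q w (PL (spanq u v))" unfolding Gorbit_PL using abcd(1) by blast
qed

lemma orbit_O2:
  assumes g: "good u v" and D: "Dt u v \<noteq> 0"
  shows "Gorbit q w (PL (spanq u v)) = O2'"
proof (intro set_eqI iffI)
  fix X assume "X \<in> Gorbit q w (PL (spanq u v))"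
  from orbit_sub[OF g this] obtain u' v' where "good u' v'" "Dt u' v' = Dt u v" "X = PL (spanq u' v')" by blast
  moreover have "Dt u' v' \<noteq> 0" using D \<open>Dt u' v' = Dt u v\<close> by simp
  ultimately show "X \<in> O2'" unfolding O2'_def by blast
next
  fix X assume "X \<in> O2'"
  then obtain u' v' where h: "good u' v'" "Dt u' v' \<noteq> 0" "X = PL (spanq u' v')" unfolding O2'_def by blast
  have wD: "w * Dt u v \<in> FQ" using g by (simp add: good_def tr_zero_iff)
  have wD': "w * Dt u' v' \<in> FQ" using h(1) by (simp add: good_def tr_zero_iff)
  define k where "k = (w * Dt u v) / (w * Dt u' v')"
  have kF: "k \<in> FQ" "k \<noteq> 0" unfolding k_def by (rule Fq_div[OF wD wD']) (use D h(2) in simp)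
  have Dk: "Dt u' (sm k v') = Dt u v" unfolding Dt_sm k_def using h(2) by (simp add: field_simps)
  obtain a b c d where abcd: "a*d + b*c = 1" "smat (a^2) (c^2) (b^2) (d^2) u = u'" "smat (a^2) (c^2) (b^2) (d^2) v = sm k v'"
    using trans_pairs[OF D Dk] by blast
  have "X = PL (spanq (smat (a^2) (c^2) (b^2) (d^2) u) (smat (a^2) (c^2) (b^2) (d^2) v))"
    unfolding abcd(2,3) spanq_scale[OF kF] h(3) ..
  thus "X \<in> Gorbit q w (PL (spanq u v))" unfolding Gorbit_PL using abcd(1) by blast
qed

end


lemma card_opt: "card (UNIV :: 'b::finite option set) = Suc (card (UNIV :: 'b set))"
proof -
  have "(UNIV :: 'b option set) = insert None (range Some)" by (auto intro: option.exhaust)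
  moreover have "card (insert None (range (Some :: 'b \<Rightarrow> _))) = Suc (card (range (Some :: 'b \<Rightarrow> _)))"
    by (rule card_insert_disjoint) auto
  moreover have "card (range (Some :: 'b \<Rightarrow> _)) = card (UNIV :: 'b set)" by (rule card_image) simp
  ultimately show ?thesis by simp
qed

context setting begin

lemma good_line:
  assumes x: "x \<noteq> (0,0)"
  shows "good x (sm w x) \<and> Dt x (sm w x) = 0 \<and> spanq x (sm w x) = Fline x"
proof -
  have D: "Dt x (sm w x) = 0" unfolding Dt_sm by (simp add: Dt_def)
  have ind: "indep x (sm w x)"
    unfolding indep_def
  proof (intro allI impI)
    fix a b assume h: "a \<in> FQ \<and> b \<in> FQ \<and> pa (sm a x) (sm b (sm w x)) = (0,0)"
    have "pa (sm a x) (sm b (sm w x)) = sm (a + b * w) x" by (simp add: sm_def pa_def algebra_simps)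
    hence "sm (a + b * w) x = (0,0)" using h by simp
    hence "a + b * w = 0" using sm_zero_iff[OF x] by blast
    thus "a = 0 \<and> b = 0" using indep_1_lam[OF w_nFq] h by blast
  qed
  have g: "good x (sm w x)" unfolding good_def using ind D by simp
  show ?thesis using g D span_Fline[OF ind D] by simp
qed

lemma O1'_param: "O1' = range (\<lambda>tau. PL (Fline (xt tau)))"
proof (intro set_eqI iffI)
  fix X assume "X \<in> O1'"
  then obtain u v where h: "good u v" "Dt u v = 0" "X = PL (spanq u v)" unfolding O1'_def by blast
  from O1_meet[OF h(1,2)] obtain tau where "spanq u v = Fline (xt tau)" by blast
  thus "X \<in> range (\<lambda>tau. PL (Fline (xt tau)))" using h(3) by simp
next
  fix X assume "X \<in> range (\<lambda>tau. PL (Fline (xt tau)))"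
  then obtain tau where X: "X = PL (Fline (xt tau))" by blast
  from good_line[OF xt_nz[of tau]] have "good (xt tau) (sm w (xt tau))" "Dt (xt tau) (sm w (xt tau)) = 0"
    "X = PL (spanq (xt tau) (sm w (xt tau)))" using X by auto
  thus "X \<in> O1'" unfolding O1'_def by blast
qed

lemma xt_inj: "xt tau' = sm l (xt tau) \<Longrightarrow> tau' = tau"
proof (cases tau; cases tau')
  fix t t' assume "xt tau' = sm l (xt tau)" "tau = Some t" "tau' = Some t'"
  hence "l = 1" "t' ^ 2 = t ^ 2" by (simp_all add: xt_def sm_def)
  thus "tau' = tau" using \<open>tau = Some t\<close> \<open>tau' = Some t'\<close> sq_inj by simp
qed (auto simp: xt_def sm_def)

lemma card_O1': "card O1' = q ^ 2 + 1"
proof -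
  have inj: "inj (\<lambda>tau. PL (Fline (xt tau)))"
  proof (rule injI)
    fix tau tau' assume e: "PL (Fline (xt tau)) = PL (Fline (xt tau'))"
    have s: "\<And>t. Fline (xt t) = spanq (xt t) (sm w (xt t))" using good_line[OF xt_nz] by simp
    have "Fline (xt tau) = Fline (xt tau')" using e unfolding s PL_eq_iff .
    moreover have "xt tau' \<in> Fline (xt tau')" unfolding Fline_def by (rule CollectI, rule exI[of _ 1]) (simp add: sm_def)
    ultimately obtain l where "xt tau' = sm l (xt tau)" unfolding Fline_def by blast
    thus "tau = tau'" using xt_inj by metis
  qed
  have "card O1' = card (UNIV :: 'a option set)" unfolding O1'_param by (rule card_image[OF inj])
  also have "\<dots> = q ^ 2 + 1" using card_opt[where 'b='a] cardF by simp
  finally show ?thesis .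
qed

lemma card_SL:
  assumes fin: "finite K" and cl: "\<And>x y. x \<in> K \<Longrightarrow> y \<in> K \<Longrightarrow> x + y \<in> K"
    "\<And>x y. x \<in> K \<Longrightarrow> y \<in> K \<Longrightarrow> x * y \<in> K" "\<And>x y. x \<in> K \<Longrightarrow> y \<in> K \<Longrightarrow> x / y \<in> K"
    and r: "r \<in> K" "r \<noteq> 0"
  shows "card {(a, b, c, d). a \<in> K \<and> b \<in> K \<and> c \<in> K \<and> d \<in> K \<and> a * d + b * c = (r::'a)}
     = (card K - 1) * card K * card K + (card K - 1) * card K"
proof -
  have K0: "0 \<in> K" using cl(1)[OF r(1) r(1)] by simp
  define S1 where "S1 = (\<lambda>(a, b, c). (a, b, c, (r + b * c) / a)) ` ((K - {0}) \<times> K \<times> K)"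
  define S2 where "S2 = (\<lambda>(b, d). (0::'a, b, r / b, d)) ` ((K - {0}) \<times> K)"
  have eq: "{(a, b, c, d). a \<in> K \<and> b \<in> K \<and> c \<in> K \<and> d \<in> K \<and> a * d + b * c = r} = S1 \<union> S2"
  proof (intro set_eqI iffI)
    fix t assume "t \<in> {(a, b, c, d). a \<in> K \<and> b \<in> K \<and> c \<in> K \<and> d \<in> K \<and> a * d + b * c = r}"
    then obtain a b c d where t: "t = (a, b, c, d)" "a \<in> K" "b \<in> K" "c \<in> K" "d \<in> K" "a * d + b * c = r" by blast
    show "t \<in> S1 \<union> S2"
    proof (cases "a = 0")
      case False
      have "a * d = r + b * c" using t(6) by (metis add_eq0 add.assoc add_self add_0_right)
      hence "d = (r + b * c) / a" using False by (simp add: field_simps)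
      thus ?thesis unfolding S1_def using t False by force
    next
      case True
      hence bc: "b * c = r" using t(6) by simp
      hence "b \<noteq> 0" using r(2) by auto
      hence "c = r / b" using bc by (simp add: field_simps)
      thus ?thesis unfolding S2_def using t True \<open>b \<noteq> 0\<close> by force
    qed
  next
    fix t assume "t \<in> S1 \<union> S2"
    thus "t \<in> {(a, b, c, d). a \<in> K \<and> b \<in> K \<and> c \<in> K \<and> d \<in> K \<and> a * d + b * c = r}"
    proof
      assume "t \<in> S1"
      then obtain y where y: "y \<in> (K - {0}) \<times> K \<times> K" "t = (\<lambda>(a, b, c). (a, b, c, (r + b * c) / a)) y"
        unfolding S1_def by blast
      obtain a b c where "y = (a, b, c)" by (cases y)
      hence h: "t = (a, b, c, (r + b * c) / a)" "a \<in> K" "a \<noteq> 0" "b \<in> K" "c \<in> K" using y by auto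
      have "a * ((r + b * c) / a) + b * c = r + (b * c + b * c)" using h(3) by (simp add: add.assoc)
      hence "a * ((r + b * c) / a) + b * c = r" by simp
      moreover have "(r + b * c) / a \<in> K" using h cl r by simp
      ultimately show ?thesis using h by simp
    next
      assume "t \<in> S2"
      then obtain y where y: "y \<in> (K - {0}) \<times> K" "t = (\<lambda>(b, d). (0::'a, b, r / b, d)) y"
        unfolding S2_def by blast
      obtain b d where "y = (b, d)" by (cases y)
      hence h: "t = (0, b, r / b, d)" "b \<in> K" "b \<noteq> 0" "d \<in> K" using y by auto
      thus ?thesis using cl r K0 by simp
    qed
  qed
  have dis: "S1 \<inter> S2 = {}" unfolding S1_def S2_def by auto
  have c1: "card S1 = (card K - 1) * card K * card K"
  proof -
    have "inj_on (\<lambda>(a, b, c). (a, b, c, (r + b * c) / a)) ((K - {0}) \<times> K \<times> K)" by (auto simp: inj_on_def)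
    hence "card S1 = card ((K - {0}) \<times> K \<times> K)" unfolding S1_def by (rule card_image)
    thus ?thesis using fin K0 by (simp add: card_cartesian_product)
  qed
  have c2: "card S2 = (card K - 1) * card K"
  proof -
    have "inj_on (\<lambda>(b, d). (0::'a, b, r / b, d)) ((K - {0}) \<times> K)" by (auto simp: inj_on_def)
    hence "card S2 = card ((K - {0}) \<times> K)" unfolding S2_def by (rule card_image)
    thus ?thesis using fin K0 by (simp add: card_cartesian_product)
  qed
  have "finite S1" "finite S2" using fin unfolding S1_def S2_def by simp_all
  thus ?thesis unfolding eq using card_Un_disjoint[OF _ _ dis] c1 c2 by simp
qed

end


context setting begin

lemma indep_of_Dt: assumes D: "Dt u v \<noteq> 0" shows "indep u v"
  unfolding indep_def
proof (intro allI impI)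
  fix a b assume h: "a \<in> FQ \<and> b \<in> FQ \<and> pa (sm a u) (sm b v) = (0,0)"
  have z: "\<And>p. Dt (0,0) p = 0" "\<And>p. Dt p (0,0) = 0" by (simp_all add: Dt_def)
  have "Dt (pa (sm a u) (sm b v)) (pa (sm 1 u) (sm 0 v)) = (a * 0 + 1 * b) * Dt u v" by (rule Dt_span)
  hence "b * Dt u v = 0" using h z by simp
  moreover have "Dt (pa (sm a u) (sm b v)) (pa (sm 0 u) (sm 1 v)) = (a * 1 + 0 * b) * Dt u v" by (rule Dt_span)
  hence "a * Dt u v = 0" using h z by simp
  ultimately show "a = 0 \<and> b = 0" using D by simp
qed

lemma comb_inj:
  assumes ind: "indep u v" and F: "a \<in> FQ" "b \<in> FQ" "a' \<in> FQ" "b' \<in> FQ"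
    and e: "pa (sm a u) (sm b v) = pa (sm a' u) (sm b' v)"
  shows "a = a' \<and> b = b'"
proof -
  have "pa (sm (a + a') u) (sm (b + b') v) = (fst (pa (sm a u) (sm b v)) + fst (pa (sm a' u) (sm b' v)),
      snd (pa (sm a u) (sm b v)) + snd (pa (sm a' u) (sm b' v)))"
    by (simp add: pa_def sm_def algebra_simps)
  also have "\<dots> = (0,0)" unfolding e by simp
  finally have z: "pa (sm (a + a') u) (sm (b + b') v) = (0,0)" .
  have "a + a' \<in> FQ" "b + b' \<in> FQ" using F by simp_all
  hence "a + a' = 0 \<and> b + b' = 0" using ind z unfolding indep_def by blast
  thus ?thesis by (simp add: add_eq0)
qed

lemma spanq_sub:
  assumes x: "x \<in> spanq u v" and y: "y \<in> spanq u v"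
  shows "spanq x y \<subseteq> spanq u v"
proof
  fix p assume "p \<in> spanq x y"
  then obtain s t where p: "p = pa (sm s x) (sm t y)" "s \<in> FQ" "t \<in> FQ" unfolding spanq_def by blast
  from x obtain a1 b1 where x': "x = pa (sm a1 u) (sm b1 v)" "a1 \<in> FQ" "b1 \<in> FQ" unfolding spanq_def by blast
  from y obtain a2 b2 where y': "y = pa (sm a2 u) (sm b2 v)" "a2 \<in> FQ" "b2 \<in> FQ" unfolding spanq_def by blast
  have "p = pa (sm (s*a1 + t*a2) u) (sm (s*b1 + t*b2) v)" unfolding p(1) x'(1) y'(1)
    by (simp add: pa_def sm_def algebra_simps)
  thus "p \<in> spanq u v" using spanq_gen p x' y' by simp
qed

definition TT :: "(('a \<times> 'a) \<times> ('a \<times> 'a)) set" where "TT = {(u, v). Dt u v = inverse w}"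
definition SLq :: "('a \<times> 'a \<times> 'a \<times> 'a) set" where
  "SLq = {(a, b, c, d). a \<in> FQ \<and> b \<in> FQ \<and> c \<in> FQ \<and> d \<in> FQ \<and> a * d + b * c = 1}"
definition ff :: "('a \<times> 'a) \<times> ('a \<times> 'a) \<Rightarrow> (nat \<Rightarrow> 'a) set set" where "ff x = PL (spanq (fst x) (snd x))"

lemma card_SLq: "card SLq = (q - 1) * q * q + (q - 1) * q"
proof -
  have "card SLq = (card FQ - 1) * card FQ * card FQ + (card FQ - 1) * card FQ"
    unfolding SLq_def by (rule card_SL) (simp_all add: finite_subset[OF subset_UNIV])
  thus ?thesis using card_Fq by simp
qed

lemma card_TT: "card TT = (q^2 - 1) * q^2 * q^2 + (q^2 - 1) * q^2"
proof -
  let ?SL = "{(a, b, c, d). a \<in> (UNIV::'a set) \<and> b \<in> UNIV \<and> c \<in> UNIV \<and> d \<in> UNIV \<and> a * d + b * c = inverse w}"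
  let ?h = "\<lambda>(a::'a, b::'a, c::'a, d::'a). ((a, c), (b, d))"
  have cS: "card ?SL = (q^2 - 1) * q^2 * q^2 + (q^2 - 1) * q^2"
    using card_SL[of UNIV "inverse w"] cardF by simp
  have "TT = ?h ` ?SL"
  proof (intro set_eqI iffI)
    fix x assume x: "x \<in> TT"
    obtain u v where uv: "x = (u, v)" by (cases x)
    obtain a c where u: "u = (a, c)" by (cases u)
    obtain b d where v: "v = (b, d)" by (cases v)
    have "a * d + b * c = inverse w" using x unfolding TT_def uv u v Dt_def by simp
    hence "(a, b, c, d) \<in> ?SL" by simp
    moreover have "x = ?h (a, b, c, d)" using uv u v by simp
    ultimately show "x \<in> ?h ` ?SL" by (rule rev_image_eqI)
  next
    fix x assume "x \<in> ?h ` ?SL"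
    then obtain t where t: "t \<in> ?SL" "x = ?h t" by blast
    obtain a b c d where "t = (a, b, c, d)" by (cases t) auto
    thus "x \<in> TT" using t unfolding TT_def Dt_def by simp
  qed
  moreover have "inj_on ?h ?SL" by (rule inj_onI) auto
  ultimately have "card TT = card ?SL" by (simp add: card_image)
  thus ?thesis using cS by simp
qed

lemma ff_TT: "ff ` TT = O2'"
proof (intro set_eqI iffI)
  fix X assume "X \<in> ff ` TT"
  then obtain x where x: "x \<in> TT" "X = ff x" by blast
  obtain u v where uv: "x = (u, v)" by (cases x)
  have h: "Dt u v = inverse w" "X = PL (spanq u v)" using x uv unfolding TT_def ff_def by simp_all
  have D: "Dt u v \<noteq> 0" using h by simp
  have "good u v" unfolding good_def using indep_of_Dt[OF D] h(1) by simp
  thus "X \<in> O2'" unfolding O2'_def using h(2) D by blast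
next
  fix X assume "X \<in> O2'"
  then obtain u v where h: "good u v" "Dt u v \<noteq> 0" "X = PL (spanq u v)" unfolding O2'_def by blast
  define k where "k = w * Dt u v"
  have kF: "k \<in> FQ" "k \<noteq> 0" using h by (simp_all add: k_def good_def tr_zero_iff)
  have kF': "inverse k \<in> FQ" "inverse k \<noteq> 0" using kF by simp_all
  have "Dt u (sm (inverse k) v) = inverse w" unfolding Dt_sm k_def using h(2) by (simp add: field_simps)
  moreover have "X = PL (spanq u (sm (inverse k) v))" unfolding spanq_scale[OF kF'] h(3) ..
  ultimately have "(u, sm (inverse k) v) \<in> TT" "X = ff (u, sm (inverse k) v)" unfolding TT_def ff_def by simp_all
  thus "X \<in> ff ` TT" by blast
qed

lemma fiber:
  assumes x0: "(u0, v0) \<in> TT"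
  shows "{x \<in> TT. ff x = ff (u0, v0)} = (\<lambda>(a, b, c, d). (pa (sm a u0) (sm b v0), pa (sm c u0) (sm d v0))) ` SLq"
proof -
  have D0: "Dt u0 v0 = inverse w" using x0 by (simp add: TT_def)
  have ind0: "indep u0 v0" using indep_of_Dt D0 by simp
  show ?thesis
  proof (intro set_eqI iffI)
    fix x assume "x \<in> {x \<in> TT. ff x = ff (u0, v0)}"
    then obtain u v where h: "x = (u, v)" "Dt u v = inverse w" "PL (spanq u v) = PL (spanq u0 v0)"
      unfolding TT_def ff_def by (cases x) auto
    have sp: "spanq u v = spanq u0 v0" using h(3) PL_eq_iff by blast
    have "u \<in> spanq u0 v0" using spanq_left sp by blast
    then obtain a b where ab: "u = pa (sm a u0) (sm b v0)" "a \<in> FQ" "b \<in> FQ" unfolding spanq_def by blast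
    have "v \<in> spanq u0 v0" using spanq_right sp by blast
    then obtain c d where cd: "v = pa (sm c u0) (sm d v0)" "c \<in> FQ" "d \<in> FQ" unfolding spanq_def by blast
    have "(a * d + c * b) * inverse w = inverse w" using h(2) D0 unfolding ab(1) cd(1) Dt_span by simp
    hence "a * d + b * c = 1" by (simp add: mult.commute)
    hence "(a, b, c, d) \<in> SLq" unfolding SLq_def using ab cd by simp
    thus "x \<in> (\<lambda>(a, b, c, d). (pa (sm a u0) (sm b v0), pa (sm c u0) (sm d v0))) ` SLq"
      using h(1) ab(1) cd(1) by force
  next
    fix x assume "x \<in> (\<lambda>(a, b, c, d). (pa (sm a u0) (sm b v0), pa (sm c u0) (sm d v0))) ` SLq"
    then obtain a b c d where h: "x = (pa (sm a u0) (sm b v0), pa (sm c u0) (sm d v0))" "a \<in> FQ" "b \<in> FQ"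
      "c \<in> FQ" "d \<in> FQ" "a * d + b * c = 1" unfolding SLq_def by auto
    define u where "u = pa (sm a u0) (sm b v0)"
    define v where "v = pa (sm c u0) (sm d v0)"
    have Duv: "Dt u v = inverse w" unfolding u_def v_def Dt_span D0 using h(6) by (simp add: mult.commute)
    have uS: "u \<in> spanq u0 v0" "v \<in> spanq u0 v0" unfolding u_def v_def using spanq_gen h by simp_all
    have e1: "pa (sm d u) (sm b v) = pa (sm (a * d + b * c) u0) (sm (2 * (b * d)) v0)"
      unfolding u_def v_def pa_def sm_def by (simp only: fst_conv snd_conv prod_eq_iff) (intro conjI; algebra)
    have e2: "pa (sm c u) (sm a v) = pa (sm (2 * (a * c)) u0) (sm (a * d + b * c) v0)"
      unfolding u_def v_def pa_def sm_def by (simp only: fst_conv snd_conv prod_eq_iff) (intro conjI; algebra)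
    have "u0 = pa (sm d u) (sm b v)" unfolding e1 h(6) by (simp add: two0 pa_def sm_def)
    hence u0S: "u0 \<in> spanq u v" using spanq_gen h by simp
    have "v0 = pa (sm c u) (sm a v)" unfolding e2 h(6) by (simp add: two0 pa_def sm_def)
    hence v0S: "v0 \<in> spanq u v" using spanq_gen h by simp
    have "spanq u v = spanq u0 v0" using spanq_sub[OF uS] spanq_sub[OF u0S v0S] by blast
    hence "x \<in> TT \<and> ff x = ff (u0, v0)" unfolding TT_def ff_def h(1) u_def[symmetric] v_def[symmetric] using Duv by simp
    thus "x \<in> {x \<in> TT. ff x = ff (u0, v0)}" by blast
  qed
qed

lemma card_fiber:
  assumes x0: "(u0, v0) \<in> TT"
  shows "card {x \<in> TT. ff x = ff (u0, v0)} = card SLq"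
proof -
  have D0: "Dt u0 v0 = inverse w" using x0 by (simp add: TT_def)
  have ind0: "indep u0 v0" using indep_of_Dt D0 by simp
  have "inj_on (\<lambda>(a, b, c, d). (pa (sm a u0) (sm b v0), pa (sm c u0) (sm d v0))) SLq"
  proof (rule inj_onI)
    fix s t assume s: "s \<in> SLq" and t: "t \<in> SLq"
      and e: "(\<lambda>(a, b, c, d). (pa (sm a u0) (sm b v0), pa (sm c u0) (sm d v0))) s =
              (\<lambda>(a, b, c, d). (pa (sm a u0) (sm b v0), pa (sm c u0) (sm d v0))) t"
    obtain a b c d where sd: "s = (a, b, c, d)" by (cases s) auto
    obtain a' b' c' d' where td: "t = (a', b', c', d')" by (cases t) auto
    have F: "a \<in> FQ" "b \<in> FQ" "c \<in> FQ" "d \<in> FQ" "a' \<in> FQ" "b' \<in> FQ" "c' \<in> FQ" "d' \<in> FQ"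
      using s t sd td unfolding SLq_def by auto
    have "pa (sm a u0) (sm b v0) = pa (sm a' u0) (sm b' v0)" "pa (sm c u0) (sm d v0) = pa (sm c' u0) (sm d' v0)"
      using e sd td by simp_all
    thus "s = t" using comb_inj[OF ind0 F(1,2,5,6)] comb_inj[OF ind0 F(3,4,7,8)] sd td by simp
  qed
  thus ?thesis unfolding fiber[OF x0] by (rule card_image)
qed

lemma card_O2': "card O2' = q ^ 3 + q"
proof -
  have finT: "finite TT" by (rule finite_subset[OF subset_UNIV]) simp
  have finO: "finite O2'" unfolding ff_TT[symmetric] using finT by simp
  have TU0: "TT = (\<Union>y\<in>ff ` TT. {x \<in> TT. ff x = y})" by blast
  have TU: "TT = (\<Union>y\<in>O2'. {x \<in> TT. ff x = y})" using TU0 unfolding ff_TT .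
  have fin2: "\<forall>y\<in>O2'. finite {x \<in> TT. ff x = y}" using finT by simp
  have dis: "\<forall>i\<in>O2'. \<forall>j\<in>O2'. i \<noteq> j \<longrightarrow> {x \<in> TT. ff x = i} \<inter> {x \<in> TT. ff x = j} = {}" by blast
  have "card TT = (\<Sum>y\<in>O2'. card {x \<in> TT. ff x = y})"
    by (subst TU) (rule card_UN_disjoint[OF finO fin2 dis])
  also have "\<dots> = (\<Sum>y\<in>O2'. card SLq)"
  proof (rule sum.cong[OF refl])
    fix y assume "y \<in> O2'"
    then obtain x where x: "x \<in> TT" "y = ff x" unfolding ff_TT[symmetric] by blast
    obtain u0 v0 where "x = (u0, v0)" by (cases x)
    thus "card {x \<in> TT. ff x = y} = card SLq" using card_fiber x by simp
  qed
  also have "\<dots> = card O2' * card SLq" by simp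
  finally have eq: "card TT = card O2' * card SLq" .
  obtain m where m: "q = m + 1" using q_pos by (cases q) auto
  have m1: "m \<ge> 1" using q_ge2 m by simp
  have X: "card SLq = m * (m+1) * (m+1) + m * (m+1)" using card_SLq m by simp
  have Xpos: "card SLq > 0" using X m1 by simp
  have q21: "q ^ 2 - 1 = m * m + 2 * m" using m by (simp add: power2_eq_square algebra_simps)
  have "card TT = (m * m + 2 * m) * (m+1)^2 * (m+1)^2 + (m * m + 2 * m) * (m+1)^2"
    unfolding card_TT q21 unfolding m ..
  also have "\<dots> = ((m+1)^3 + (m+1)) * (m * (m+1) * (m+1) + m * (m+1))"
    by (simp add: power2_eq_square power3_eq_cube algebra_simps)
  also have "\<dots> = (q ^ 3 + q) * card SLq" by (simp only: X) (simp only: m)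
  finally have "card O2' * card SLq = (q ^ 3 + q) * card SLq" using eq by simp
  thus ?thesis using Xpos by (cases "SLq = {}") simp_all
qed

lemma main_in_locale:
  "Gorbit q w ` WPlanesN q w = {O1', O2'} \<and> card O1' = q ^ 2 + 1 \<and> card O2' = q ^ 3 + q"
proof -
  have "Gorbit q w ` WPlanesN q w = {O1', O2'}"
  proof (intro set_eqI iffI)
    fix X assume "X \<in> Gorbit q w ` WPlanesN q w"
    then obtain pi where pi: "pi \<in> WPlanesN q w" "X = Gorbit q w pi" by blast
    from P_PL[OF pi(1)] obtain u v where uv: "good u v" "pi = PL (spanq u v)" by blast
    show "X \<in> {O1', O2'}"
    proof (cases "Dt u v = 0")
      case True thus ?thesis using orbit_O1[OF uv(1)] pi(2) uv(2) by simp
    next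
      case False thus ?thesis using orbit_O2[OF uv(1)] pi(2) uv(2) by simp
    qed
  next
    fix X assume "X \<in> {O1', O2'}"
    thus "X \<in> Gorbit q w ` WPlanesN q w"
    proof
      assume X: "X = O1'"
      have x: "(0, 1) \<noteq> ((0, 0) :: 'a \<times> 'a)" by simp
      from good_line[OF x] have g: "good (0,1) (sm w (0,1))" "Dt (0,1) (sm w (0,1)) = (0::'a)" by auto
      have "X = Gorbit q w (PL (spanq (0,1) (sm w (0,1))))" using orbit_O1[OF g] X by simp
      moreover have "PL (spanq (0,1) (sm w (0,1))) \<in> WPlanesN q w" by (rule PL_in_P[OF g(1)])
      ultimately show ?thesis by blast
    next
      assume "X \<in> {O2'}"
      hence X: "X = O2'" by simp
      have D: "Dt (inverse w, 0) (0, 1) = inverse w" by (simp add: Dt_def)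
      hence Dnz: "Dt (inverse w, 0) (0, 1) \<noteq> 0" by simp
      have g: "good (inverse w, 0) (0, 1)" unfolding good_def using indep_of_Dt[OF Dnz] D by simp
      have "X = Gorbit q w (PL (spanq (inverse w, 0) (0, 1)))" using orbit_O2[OF g Dnz] X by simp
      moreover have "PL (spanq (inverse w, 0) (0, 1)) \<in> WPlanesN q w" by (rule PL_in_P[OF g])
      ultimately show ?thesis by blast
    qed
  qed
  thus ?thesis using card_O1' card_O2' by simp
qed

end

theorem mainTheorem12:
  fixes q n :: nat and \<omega> :: "'a::{field,finite}"
  assumes "n \<ge> 1" and "q = 2 ^ n" and "card (UNIV :: 'a set) = q ^ 2"
    and "\<omega> \<notin> Fq q" and "\<omega> + \<omega> ^ q = 1"
  shows "let P = WPlanesN q \<omega>;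
             O1 = {\<pi> \<in> P. \<exists>L \<in> Spread q. \<pi> \<inter> Qpts q = L};
             O2 = {\<pi> \<in> P. nondeg_conic_in q \<pi> (\<pi> \<inter> Qpts q)}
         in Gorbit q \<omega> ` P = {O1, O2} \<and> card O1 = q ^ 2 + 1 \<and> card O2 = q ^ 3 + q"
proof -
  interpret S: setting q n \<omega> using assms by unfold_locales
  show ?thesis unfolding Let_def S.O1_eq S.O2_eq using S.main_in_locale .
qed



end
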